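(* There does not exist an unconditionally secure QPKE scheme. More precisely, for every (correct) QPKE scheme $(\mathsf{SKGen},\mathsf{PKGen},\mathsf{Enc},\mathsf{Dec})$ there is a computationally unbounded adversary which, in the everlasting-security experiment (receiving a single copy of the public key), recovers the encrypted message $m$ with certainty; in particular the trace distance between the experiment outputs for $m=0$ and $m=1$ equals $1$ for this adversary.
   Context: A QPKE scheme consists of: a PPT algorithm $\mathsf{SKGen}(1^\lambda)$ outputting a classical secret key $\mathsf{sk}$; a QPT algorithm $\mathsf{PKGen}(\mathsf{sk})$ outputting a (possibly mixed) quantum state $\rho$ and a classical string $\mathsf{pk}$; a QPT algorithm $\mathsf{Enc}(\rho,\mathsf{pk},m)$ outputting a ciphertext $\mathsf{ct}$ for $m\in\{0,1\}$; a QPT algorithm $\mathsf{Dec}(\mathsf{sk},\mathsf{ct})$ outputting $m\in\{0,1\}$. Correctness: for all $\lambda$ and $m$, $\Pr[\mathsf{Dec}(\mathsf{sk},\mathsf{Enc}(\rho,\mathsf{pk},m))=m]=1$ where $\mathsf{sk}\gets\mathsf{SKGen}(1^\lambda)$, $(\rho,\mathsf{pk})\gets\mathsf{PKGen}(\mathsf{sk})$. The everlasting-security experiment $\mathsf{Exp}^{\mathcal A}(1^\lambda,m)$: sample $\mathsf{sk}\gets\mathsf{SKGen}(1^\lambda)$, $(\rho,\mathsf{pk})\gets\mathsf{PKGen}(\mathsf{sk})$, give $(\rho,\mathsf{pk})$ to $\mathcal A$, which returns a modified public-key register and an internal register; compute $\mathsf{ct}$ by applying $\mathsf{Enc}(\cdot,\mathsf{pk},m)$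 (with the original $\mathsf{pk}$) to the returned register; output the joint state of $\mathsf{ct}$ and the internal register. Unconditional security would require the trace distance between the outputs for $m=0$ and $m=1$ to be negligible for all adversaries $\mathcal A$, including computationally unbounded ones. *)

theory Defs
  imports "Jordan_Normal_Form.Matrix" "HOL-Probability.Probability_Mass_Function"
begin

definition dagger :: "complex mat \<Rightarrow> complex mat" where
  "dagger A = Matrix.mat (dim_col A) (dim_row A) (\<lambda>(i,j). cnj (A $$ (j,i)))"

definition mtrace :: "complex mat \<Rightarrow> complex" where
  "mtrace A = (\<Sum>i<dim_row A. A $$ (i,i))"

definition psd :: "nat \<Rightarrow> complex mat \<Rightarrow> bool" where
  "psd n A \<longleftrightarrow> A \<in> carrier_mat n n \<and> dagger A = A \<and>
     (\<forall>v \<in> carrier_vec n. 0 \<le> Re (\<Sum>i<n. cnj (v $ i) * (A *\<^sub>v v) $ i))"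

definition density :: "nat \<Rightarrow> complex mat \<Rightarrow> bool" where
  "density n \<rho> \<longleftrightarrow> psd n \<rho> \<and> mtrace \<rho> = 1"

(* POVM element E (outcome "1"); the complementary element is 1 - E *)
definition povm_elt :: "nat \<Rightarrow> complex mat \<Rightarrow> bool" where
  "povm_elt n E \<longleftrightarrow> psd n E \<and> psd n (1\<^sub>m n - E)"

definition sum_mats :: "nat \<Rightarrow> nat \<Rightarrow> complex mat list \<Rightarrow> complex mat" where
  "sum_mats r c Ms = foldr (+) Ms (0\<^sub>m r c)"

definition kraus_channel :: "nat \<Rightarrow> nat \<Rightarrow> complex mat list \<Rightarrow> bool" where
  "kraus_channel n m Ks \<longleftrightarrow> (\<forall>K \<in> set Ks. K \<in> carrier_mat m n) \<and>
     sum_mats n n (map (\<lambda>K. dagger K * K) Ks) = 1\<^sub>m n"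

definition apply_channel :: "nat \<Rightarrow> complex mat list \<Rightarrow> complex mat \<Rightarrow> complex mat" where
  "apply_channel m Ks \<rho> = sum_mats m m (map (\<lambda>K. K * \<rho> * dagger K) Ks)"

definition kron :: "complex mat \<Rightarrow> complex mat \<Rightarrow> complex mat" where
  "kron A B = Matrix.mat (dim_row A * dim_row B) (dim_col A * dim_col B)
     (\<lambda>(i,j). A $$ (i div dim_row B, j div dim_col B) * B $$ (i mod dim_row B, j mod dim_col B))"

definition meas_prob :: "nat \<Rightarrow> complex mat \<Rightarrow> bool \<Rightarrow> complex mat \<Rightarrow> real" where
  "meas_prob n E m \<rho> = (if m then Re (mtrace (E * \<rho>)) else Re (mtrace ((1\<^sub>m n - E) * \<rho>)))"

(* trace distance, variational form  D(rho,sigma) = max_P tr(P(rho - sigma)) over projectors P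
   (Nielsen-Chuang (9.22)) *)
definition trace_distance :: "nat \<Rightarrow> complex mat \<Rightarrow> complex mat \<Rightarrow> real" where
  "trace_distance n \<rho> \<sigma> =
     Sup {Re (mtrace (P * (\<rho> - \<sigma>))) | P. P \<in> carrier_mat n n \<and> dagger P = P \<and> P * P = P}"

(* the QPKE scheme at a fixed security parameter:
   skgen : distribution of sk;  PKGen(sk): classical pk ~ pkgen sk, quantum part rho sk pk
   (dimension dpk);  Enc(.,pk,m): channel enc pk m from dpk to dct;
   Dec(sk,.): two-outcome measurement with outcome-1 element dec sk. *)
definition qpke_correct ::
  "'sk::finite pmf \<Rightarrow> ('sk \<Rightarrow> 'pk::finite pmf) \<Rightarrow> ('sk \<Rightarrow> 'pk \<Rightarrow> complex mat) \<Rightarrow>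
   ('pk \<Rightarrow> bool \<Rightarrow> complex mat list) \<Rightarrow> ('sk \<Rightarrow> complex mat) \<Rightarrow> nat \<Rightarrow> nat \<Rightarrow> bool" where
  "qpke_correct skgen pkgen rho enc dec dpk dct \<longleftrightarrow>
     (\<forall>sk pk. pmf skgen sk > 0 \<and> pmf (pkgen sk) pk > 0 \<longrightarrow> density dpk (rho sk pk)) \<and>
     (\<forall>pk m. kraus_channel dpk dct (enc pk m)) \<and>
     (\<forall>sk. povm_elt dct (dec sk)) \<and>
     (\<forall>m. (\<Sum>sk\<in>UNIV. \<Sum>pk\<in>UNIV. pmf skgen sk * pmf (pkgen sk) pk *
            meas_prob dct (dec sk) m (apply_channel dct (enc pk m) (rho sk pk))) = 1)"

(* output of the everlasting-security experiment: joint state of ct (dim dct) and the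
   adversary's internal register (dim dint); adversary: channel adv pk from dpk to dpk*dint *)
definition exp_out ::
  "'sk::finite pmf \<Rightarrow> ('sk \<Rightarrow> 'pk::finite pmf) \<Rightarrow> ('sk \<Rightarrow> 'pk \<Rightarrow> complex mat) \<Rightarrow>
   ('pk \<Rightarrow> bool \<Rightarrow> complex mat list) \<Rightarrow> nat \<Rightarrow> nat \<Rightarrow> nat \<Rightarrow>
   ('pk \<Rightarrow> complex mat list) \<Rightarrow> bool \<Rightarrow> complex mat" where
  "exp_out skgen pkgen rho enc dpk dct dint adv m =
     Matrix.mat (dct * dint) (dct * dint) (\<lambda>ij. \<Sum>sk\<in>UNIV. \<Sum>pk\<in>UNIV.
        of_real (pmf skgen sk * pmf (pkgen sk) pk) *
        apply_channel (dct * dint) (map (\<lambda>K. kron K (1\<^sub>m dint)) (enc pk m))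
          (apply_channel (dpk * dint) (adv pk) (rho sk pk)) $$ ij)"

end

theory Submission
  imports Defs
begin

definition ip :: "nat \<Rightarrow> (nat \<Rightarrow> complex) \<Rightarrow> (nat \<Rightarrow> complex) \<Rightarrow> complex" where
  "ip n f g = (\<Sum>i<n. cnj (f i) * g i)"

definition mv :: "complex mat \<Rightarrow> nat \<Rightarrow> (nat \<Rightarrow> complex) \<Rightarrow> nat \<Rightarrow> complex" where
  "mv A n f = (\<lambda>i. \<Sum>l<n. A $$ (i,l) * f l)"

definition qf :: "nat \<Rightarrow> complex mat \<Rightarrow> (nat \<Rightarrow> complex) \<Rightarrow> complex" where
  "qf n A f = ip n f (mv A n f)"

lemma psd_carrier: "psd n A \<Longrightarrow> A \<in> carrier_mat n n"
  unfolding psd_def by auto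

lemma psd_herm:
  assumes "psd n A" "i < n" "j < n"
  shows "A $$ (j,i) = cnj (A $$ (i,j))"
proof -
  have A: "A \<in> carrier_mat n n" "dagger A = A" using assms(1) unfolding psd_def by auto
  have "dagger A $$ (j,i) = cnj (A $$ (i,j))"
    using A(1) assms(2,3) unfolding dagger_def by auto
  then show ?thesis using A(2) by simp
qed

lemma psd_qf:
  assumes "psd n A"
  shows "0 \<le> Re (qf n A f)"
proof -
  have A: "A \<in> carrier_mat n n" using assms psd_carrier by auto
  define v where "v = Matrix.vec n f"
  have v: "v \<in> carrier_vec n" unfolding v_def by auto
  have "0 \<le> Re (\<Sum>i<n. cnj (v $ i) * (A *\<^sub>v v) $ i)" using assms v unfolding psd_def by auto
  moreover have "(\<Sum>i<n. cnj (v $ i) * (A *\<^sub>v v) $ i) = qf n A f"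
    unfolding qf_def ip_def mv_def
  proof (rule sum.cong[OF refl])
    fix i assume i: "i \<in> {..<n}"
    have "(A *\<^sub>v v) $ i = (\<Sum>l<n. A $$ (i,l) * f l)"
      using A i unfolding v_def by (auto simp: scalar_prod_def atLeast0LessThan intro!: sum.cong)
    then show "cnj (v $ i) * (A *\<^sub>v v) $ i = cnj (f i) * (\<Sum>l<n. A $$ (i, l) * f l)"
      using i unfolding v_def by auto
  qed
  ultimately show ?thesis by simp
qed

lemma sum_if2:
  assumes "i < (n::nat)" "j < n" "i \<noteq> j"
  shows "(\<Sum>l<n. g l * (if l = i then s else if l = j then t else 0)) = g i * s + g j * (t::complex)"
proof -
  have "(\<Sum>l<n. g l * (if l = i then s else if l = j then t else 0))
      = (\<Sum>l<n. (if l = i then g i * s else 0) + (if l = j then g j * t else 0))"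
    by (rule sum.cong) (use assms in auto)
  also have "\<dots> = g i * s + g j * t"
    unfolding sum.distrib by (subst sum.delta, simp, subst sum.delta, simp, use assms in auto)
  finally show ?thesis .
qed

lemma sum_mult_delta:
  assumes "i < (n::nat)"
  shows "(\<Sum>l<n. g l * (if l = i then s else 0)) = g i * (s::complex)"
proof -
  have "(\<Sum>l<n. g l * (if l = i then s else 0)) = (\<Sum>l<n. if l = i then g i * s else 0)"
    by (rule sum.cong) auto
  then show ?thesis using assms by simp
qed

lemma psd_zero_row:
  assumes "psd n A" "i < n" "j < n" "A $$ (i,i) = 0"
  shows "A $$ (i,j) = 0"
proof (cases "i = j")
  case True then show ?thesis using assms by simp
next
  case False
  define a where "a = A $$ (i,j)"
  have aji: "A $$ (j,i) = cnj a" using psd_herm[OF assms(1,2,3)] a_def by simp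
  have "\<And>s. qf n A (\<lambda>l. if l = i then s else if l = j then 1 else 0)
        = cnj s * a + cnj a * s + A $$ (j,j)"
  proof -
    fix s
    define f where "f = (\<lambda>l. if l = i then s else if l = j then (1::complex) else 0)"
    have mvf: "mv A n f l = A $$ (l,i) * s + A $$ (l,j)" for l
      unfolding mv_def f_def using assms(2,3) False by (simp add: sum_if2)
    have "qf n A f = (\<Sum>l<n. mv A n f l * (if l = i then cnj s else if l = j then 1 else 0))"
      unfolding qf_def ip_def by (rule sum.cong, auto simp: f_def)
    also have "\<dots> = cnj s * mv A n f i + mv A n f j"
      using assms(2,3) False by (simp add: sum_if2)
    also have "\<dots> = cnj s * a + cnj a * s + A $$ (j,j)"
      unfolding mvf using assms(4) aji a_def by (simp add: ring_distribs)
    finally show "qf n A (\<lambda>l. if l = i then s else if l = j then 1 else 0)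
        = cnj s * a + cnj a * s + A $$ (j,j)" unfolding f_def .
  qed
  note eq = this
  show ?thesis
  proof (rule ccontr)
    assume "A $$ (i,j) \<noteq> 0"
    then have a0: "a \<noteq> 0" using a_def by simp
    define c where "c = (cmod a)^2"
    have c0: "c > 0" using a0 unfolding c_def by simp
    have cnja: "cnj a * a = of_real c" "a * cnj a = of_real c"
      using cmod_power2[of a] unfolding c_def by (simp_all add: complex_eq_iff power2_eq_square)
    have cRe: "c = Re a * Re a + Im a * Im a" using cmod_power2[of a] unfolding c_def by (simp add: power2_eq_square)
    have d: "0 \<le> Re (A $$ (j,j))"
    proof -
      have "0 \<le> Re (qf n A (\<lambda>l. if l = i then 0 else if l = j then 1 else 0))"
        using psd_qf[OF assms(1)] by blast
      then show ?thesis unfolding eq by simp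
    qed
    define t where "t = (Re (A $$ (j,j)) + 1) / c"
    define s where "s = - (of_real t * a)"
    have "0 \<le> Re (qf n A (\<lambda>l. if l = i then s else if l = j then 1 else 0))"
      using psd_qf[OF assms(1)] by blast
    also have "Re (qf n A (\<lambda>l. if l = i then s else if l = j then 1 else 0))
        = - 2 * t * c + Re (A $$ (j,j))"
      unfolding eq s_def using cRe by (simp add: algebra_simps)
    also have "\<dots> = - Re (A $$ (j,j)) - 2" using c0 unfolding t_def by (simp add: field_simps)
    finally show False using d by simp
  qed
qed


lemma psd_sum_qf:
  assumes "A \<in> carrier_mat n n" "v \<in> carrier_vec n"
  shows "(\<Sum>i<n. cnj (v $ i) * (A *\<^sub>v v) $ i) = qf n A (\<lambda>i. v $ i)"
  unfolding qf_def ip_def mv_def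
  by (rule sum.cong[OF refl]) (use assms in \<open>auto simp: scalar_prod_def atLeast0LessThan intro!: sum.cong\<close>)

lemma qf_unit:
  assumes "i < n"
  shows "qf n A (\<lambda>l. if l = i then 1 else 0) = A $$ (i,i)"
proof -
  have "qf n A (\<lambda>l. if l = i then 1 else 0) = (\<Sum>l<n. if l = i then mv A n (\<lambda>l. if l = i then 1 else 0) i else 0)"
    unfolding qf_def ip_def by (rule sum.cong) auto
  also have "\<dots> = mv A n (\<lambda>l. if l = i then 1 else 0) i" using assms by simp
  also have "\<dots> = (\<Sum>l<n. if l = i then A $$ (i,i) else 0)"
    unfolding mv_def by (rule sum.cong) auto
  also have "\<dots> = A $$ (i,i)" using assms by simp
  finally show ?thesis .
qed

lemma psd_diag_real:
  assumes "psd n A" "i < n"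
  shows "A $$ (i,i) = of_real (Re (A $$ (i,i)))" "0 \<le> Re (A $$ (i,i))"
proof -
  have "A $$ (i,i) = cnj (A $$ (i,i))" using psd_herm[OF assms(1) assms(2) assms(2)] .
  then have "Im (A $$ (i,i)) = 0" by (metis cnj.simps(2) neg_equal_zero)
  then show "A $$ (i,i) = of_real (Re (A $$ (i,i)))" by (simp add: complex_eq_iff)
  show "0 \<le> Re (A $$ (i,i))" using psd_qf[OF assms(1), of "\<lambda>l. if l = i then 1 else 0"]
    unfolding qf_unit[OF assms(2)] .
qed

lemma psd_gram:
  "psd n A \<Longrightarrow> \<exists>ws. \<forall>i<n. \<forall>j<n. A $$ (i,j) = (\<Sum>w\<leftarrow>ws. w i * cnj (w j))"
proof (induction "card {i. i < n \<and> A $$ (i,i) \<noteq> 0}" arbitrary: A rule: less_induct)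
  case less
  note psdA = less.prems
  have Acar: "A \<in> carrier_mat n n" using psdA psd_carrier by auto
  show ?case
  proof (cases "\<exists>i<n. A $$ (i,i) \<noteq> 0")
    case False
    then have "\<forall>i<n. \<forall>j<n. A $$ (i,j) = 0" using psd_zero_row[OF psdA] by blast
    then show ?thesis by (intro exI[of _ "[]"]) simp
  next
    case True
    then obtain i where i: "i < n" "A $$ (i,i) \<noteq> 0" by blast
    define \<alpha> where "\<alpha> = Re (A $$ (i,i))"
    have Aii: "A $$ (i,i) = of_real \<alpha>" using psd_diag_real[OF psdA i(1)] \<alpha>_def by simp
    have \<alpha>0: "\<alpha> > 0" using psd_diag_real[OF psdA i(1)] i(2) Aii unfolding \<alpha>_def[symmetric] by force
    define r where "r = sqrt \<alpha>"
    have r0: "r > 0" "r * r = \<alpha>" using \<alpha>0 unfolding r_def by auto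
    define w where "w = (\<lambda>l. A $$ (l,i) / of_real r)"
    have cw: "cnj (w m) = A $$ (i,m) / of_real r" if "m < n" for m
      unfolding w_def using psd_herm[OF psdA i(1) that] by simp
    have ww: "w l * cnj (w m) = A $$ (l,i) * A $$ (i,m) / of_real \<alpha>" if "m < n" for l m
      unfolding cw[OF that] unfolding w_def r0(2)[symmetric] by simp
    define A' where "A' = Matrix.mat n n (\<lambda>(l,m). A $$ (l,m) - w l * cnj (w m))"
    have A'car: "A' \<in> carrier_mat n n" unfolding A'_def by simp
    have A'idx: "A' $$ (l,m) = A $$ (l,m) - w l * cnj (w m)" if "l < n" "m < n" for l m
      unfolding A'_def using that by simp
    have herm': "dagger A' = A'"
    proof (rule eq_matI)
      fix l m assume lm: "l < dim_row A'" "m < dim_col A'"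
      then have ln: "l < n" and mn: "m < n" using A'car by auto
      have "dagger A' $$ (l,m) = cnj (A' $$ (m,l))" unfolding dagger_def using A'car ln mn by simp
      also have "\<dots> = cnj (A $$ (m,l)) - cnj (w m) * w l" using A'idx[OF mn ln] by simp
      also have "\<dots> = A $$ (l,m) - w l * cnj (w m)" using psd_herm[OF psdA mn ln] by (simp add: mult.commute)
      also have "\<dots> = A' $$ (l,m)" using A'idx[OF ln mn] by simp
      finally show "dagger A' $$ (l,m) = A' $$ (l,m)" .
    qed (use A'car in \<open>auto simp: dagger_def\<close>)
    have qfA': "0 \<le> Re (qf n A' f)" for f
    proof -
      define \<beta> where "\<beta> = mv A n f i"
      define \<gamma> where "\<gamma> = (\<Sum>m<n. cnj (w m) * f m)"
      have \<gamma>: "\<gamma> = \<beta> / of_real r"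
        unfolding \<gamma>_def \<beta>_def mv_def by (simp add: cw sum_divide_distrib)
      have cb: "(\<Sum>l<n. cnj (f l) * A $$ (l,i)) = cnj \<beta>"
        unfolding \<beta>_def mv_def by (simp add: psd_herm[OF psdA i(1)] mult.commute)
      have cg: "(\<Sum>l<n. cnj (f l) * w l) = cnj \<gamma>"
        unfolding \<gamma>_def by (simp add: mult.commute)
      have mvA': "mv A' n f l = mv A n f l - w l * \<gamma>" if "l < n" for l
        unfolding mv_def \<gamma>_def using that
        by (simp add: A'idx left_diff_distrib sum_subtractf sum_distrib_left mult.assoc)
      have "qf n A' f = (\<Sum>l<n. cnj (f l) * mv A n f l - cnj (f l) * w l * \<gamma>)"
        unfolding qf_def ip_def by (rule sum.cong) (auto simp: mvA' right_diff_distrib mult.assoc)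
      also have "\<dots> = qf n A f - cnj \<gamma> * \<gamma>"
        unfolding sum_subtractf qf_def ip_def by (simp add: sum_distrib_right[symmetric] cg)
      finally have e1: "qf n A' f = qf n A f - cnj \<beta> * \<beta> / of_real \<alpha>"
        unfolding \<gamma> r0(2)[symmetric] by simp
      define s where "s = - \<beta> / of_real \<alpha>"
      define g where "g = (\<lambda>l. f l + (if l = i then s else 0))"
      have mvg: "mv A n g l = mv A n f l + A $$ (l,i) * s" for l
        unfolding mv_def g_def using i(1) by (simp add: ring_distribs sum.distrib sum_mult_delta)
      have "qf n A g = (\<Sum>l<n. cnj (f l) * mv A n f l + cnj (f l) * A $$ (l,i) * s
                  + (if l = i then cnj s * (mv A n f i + A $$ (i,i) * s) else 0))"
        unfolding qf_def ip_def mvg by (rule sum.cong) (auto simp: g_def ring_distribs)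
      also have "\<dots> = qf n A f + cnj \<beta> * s + cnj s * (\<beta> + of_real \<alpha> * s)"
        unfolding sum.distrib qf_def ip_def using i(1)
        by (simp add: sum_distrib_right[symmetric] cb Aii \<beta>_def)
      also have "\<dots> = qf n A f - cnj \<beta> * \<beta> / of_real \<alpha>"
        unfolding s_def using \<alpha>0 by (simp add: field_simps)
      finally have "qf n A' f = qf n A g" using e1 by simp
      then show ?thesis using psd_qf[OF psdA, of g] by simp
    qed
    have psdA': "psd n A'"
      unfolding psd_def using A'car herm' qfA' psd_sum_qf[OF A'car] by auto
    have sub: "{l. l < n \<and> A' $$ (l,l) \<noteq> 0} \<subset> {l. l < n \<and> A $$ (l,l) \<noteq> 0}"
    proof -
      have "A' $$ (l,l) = 0" if "l < n" "A $$ (l,l) = 0" for l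
        using A'idx[OF that(1) that(1)] ww[OF that(1), of l] psd_zero_row[OF psdA that(1) i(1) that(2)]
        that by simp
      moreover have "A' $$ (i,i) = 0"
        using A'idx[OF i(1) i(1)] ww[OF i(1), of i] Aii \<alpha>0 by simp
      ultimately show ?thesis using i by auto
    qed
    then have "card {l. l < n \<and> A' $$ (l,l) \<noteq> 0} < card {l. l < n \<and> A $$ (l,l) \<noteq> 0}"
      by (intro psubset_card_mono) auto
    from less.hyps[OF this psdA'] obtain ws where
      ws: "\<forall>l<n. \<forall>m<n. A' $$ (l,m) = (\<Sum>w\<leftarrow>ws. w l * cnj (w m))" by blast
    show ?thesis
    proof (intro exI[of _ "w # ws"] allI impI)
      fix l m assume "l < n" "m < n"
      then have "A $$ (l, m) - w l * cnj (w m) = (\<Sum>w\<leftarrow>ws. w l * cnj (w m))"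
        using ws A'idx by auto
      then show "A $$ (l, m) = (\<Sum>w\<leftarrow>w # ws. w l * cnj (w m))"
        by (simp add: algebra_simps)
    qed
  qed
qed


definition rep :: "nat \<Rightarrow> complex mat \<Rightarrow> 'a set \<Rightarrow> ('a \<Rightarrow> nat \<Rightarrow> complex) \<Rightarrow> bool" where
  "rep n M T y \<longleftrightarrow> M \<in> carrier_mat n n \<and> finite T \<and>
     (\<forall>i<n. \<forall>j<n. M $$ (i,j) = (\<Sum>t\<in>T. y t i * cnj (y t j)))"

lemma psd_rep: "psd n A \<Longrightarrow> \<exists>(T::nat set) y. rep n A T y"
proof -
  assume a: "psd n A"
  from psd_gram[OF a] obtain ws where ws: "\<forall>i<n. \<forall>j<n. A $$ (i,j) = (\<Sum>w\<leftarrow>ws. w i * cnj (w j))" by blast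
  have "rep n A {..<length ws} (\<lambda>k. ws ! k)"
    unfolding rep_def using psd_carrier[OF a] ws by (auto simp: sum_list_sum_nth atLeast0LessThan)
  then show ?thesis by blast
qed

lemma sum3_swap: "(\<Sum>b\<in>B. \<Sum>a\<in>A. \<Sum>t\<in>T. f a b t) = (\<Sum>t\<in>T. \<Sum>a\<in>A. \<Sum>b\<in>B. f a b t)"
proof -
  have "(\<Sum>b\<in>B. \<Sum>a\<in>A. \<Sum>t\<in>T. f a b t) = (\<Sum>b\<in>B. \<Sum>t\<in>T. \<Sum>a\<in>A. f a b t)"
    by (rule sum.cong[OF refl], rule sum.swap)
  also have "\<dots> = (\<Sum>t\<in>T. \<Sum>b\<in>B. \<Sum>a\<in>A. f a b t)" by (rule sum.swap)
  also have "\<dots> = (\<Sum>t\<in>T. \<Sum>a\<in>A. \<Sum>b\<in>B. f a b t)" by (rule sum.cong[OF refl], rule sum.swap)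
  finally show ?thesis .
qed

lemma sum3_swap2: "(\<Sum>i\<in>I. \<Sum>l\<in>L. \<Sum>t\<in>T. f i l t) = (\<Sum>t\<in>T. \<Sum>i\<in>I. \<Sum>l\<in>L. f i l t)"
proof -
  have "(\<Sum>i\<in>I. \<Sum>l\<in>L. \<Sum>t\<in>T. f i l t) = (\<Sum>i\<in>I. \<Sum>t\<in>T. \<Sum>l\<in>L. f i l t)"
    by (rule sum.cong[OF refl], rule sum.swap)
  also have "\<dots> = (\<Sum>t\<in>T. \<Sum>i\<in>I. \<Sum>l\<in>L. f i l t)" by (rule sum.swap)
  finally show ?thesis .
qed

lemma sum4_swap: "(\<Sum>a\<in>A. \<Sum>b\<in>B. \<Sum>c\<in>C. \<Sum>d\<in>D. f a b c d) = (\<Sum>c\<in>C. \<Sum>d\<in>D. \<Sum>a\<in>A. \<Sum>b\<in>B. f a b c d)"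
proof -
  have "(\<Sum>a\<in>A. \<Sum>b\<in>B. \<Sum>c\<in>C. \<Sum>d\<in>D. f a b c d) = (\<Sum>a\<in>A. \<Sum>c\<in>C. \<Sum>b\<in>B. \<Sum>d\<in>D. f a b c d)"
    by (rule sum.cong[OF refl], rule sum.swap)
  also have "\<dots> = (\<Sum>a\<in>A. \<Sum>c\<in>C. \<Sum>d\<in>D. \<Sum>b\<in>B. f a b c d)"
    by (rule sum.cong[OF refl], rule sum.cong[OF refl], rule sum.swap)
  also have "\<dots> = (\<Sum>c\<in>C. \<Sum>a\<in>A. \<Sum>d\<in>D. \<Sum>b\<in>B. f a b c d)" by (rule sum.swap)
  also have "\<dots> = (\<Sum>c\<in>C. \<Sum>d\<in>D. \<Sum>a\<in>A. \<Sum>b\<in>B. f a b c d)"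
    by (rule sum.cong[OF refl], rule sum.swap)
  finally show ?thesis .
qed

lemma mult_idx:
  assumes "A \<in> carrier_mat r m" "B \<in> carrier_mat m c" "i < r" "j < c"
  shows "(A * B) $$ (i,j) = (\<Sum>l<m. A $$ (i,l) * B $$ (l,j))"
  using assms by (auto simp: scalar_prod_def atLeast0LessThan intro!: sum.cong)

lemma dagger_carrier: "K \<in> carrier_mat r n \<Longrightarrow> dagger K \<in> carrier_mat n r"
  unfolding dagger_def by auto

lemma dagger_idx: "K \<in> carrier_mat r n \<Longrightarrow> i < n \<Longrightarrow> j < r \<Longrightarrow> dagger K $$ (i,j) = cnj (K $$ (j,i))"
  unfolding dagger_def by auto

lemma sum_mats_idx:
  assumes "\<forall>M\<in>set Ms. M \<in> carrier_mat r c"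
  shows "sum_mats r c Ms \<in> carrier_mat r c \<and>
    (\<forall>i<r. \<forall>j<c. sum_mats r c Ms $$ (i,j) = (\<Sum>k<length Ms. (Ms!k) $$ (i,j)))"
  using assms
proof (induction Ms)
  case Nil
  then show ?case unfolding sum_mats_def by auto
next
  case (Cons M Ms)
  then have M: "M \<in> carrier_mat r c" and IH: "sum_mats r c Ms \<in> carrier_mat r c"
    "\<forall>i<r. \<forall>j<c. sum_mats r c Ms $$ (i,j) = (\<Sum>k<length Ms. (Ms!k) $$ (i,j))" by auto
  have eq: "sum_mats r c (M # Ms) = M + sum_mats r c Ms" unfolding sum_mats_def by simp
  show ?case unfolding eq using M IH by (auto simp del: sum.lessThan_Suc simp add: sum.lessThan_Suc_shift)
qed

lemma conj_rank1:
  assumes K: "K \<in> carrier_mat r n" and rho: "rep n \<rho> T y" and ij: "i < r" "j < r"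
  shows "(K * \<rho> * dagger K) $$ (i,j) = (\<Sum>t\<in>T. mv K n (y t) i * cnj (mv K n (y t) j))"
proof -
  have rc: "\<rho> \<in> carrier_mat n n" and fin: "finite T"
    and re: "\<forall>a<n. \<forall>b<n. \<rho> $$ (a,b) = (\<Sum>t\<in>T. y t a * cnj (y t b))" using rho unfolding rep_def by auto
  have Kr: "K * \<rho> \<in> carrier_mat r n" using K rc by auto
  have "(K * \<rho> * dagger K) $$ (i,j) = (\<Sum>b<n. (K * \<rho>) $$ (i,b) * dagger K $$ (b,j))"
    by (rule mult_idx[OF Kr dagger_carrier[OF K] ij])
  also have "\<dots> = (\<Sum>b<n. (\<Sum>a<n. K $$ (i,a) * (\<Sum>t\<in>T. y t a * cnj (y t b))) * cnj (K $$ (j,b)))"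
  proof (rule sum.cong[OF refl])
    fix b assume b: "b \<in> {..<n}"
    then have b': "b < n" by simp
    have 1: "(K * \<rho>) $$ (i,b) = (\<Sum>a<n. K $$ (i,a) * \<rho> $$ (a,b))" by (rule mult_idx[OF K rc ij(1) b'])
    have 2: "dagger K $$ (b,j) = cnj (K $$ (j,b))" by (rule dagger_idx[OF K b' ij(2)])
    show "(K * \<rho>) $$ (i,b) * dagger K $$ (b,j) = (\<Sum>a<n. K $$ (i,a) * (\<Sum>t\<in>T. y t a * cnj (y t b))) * cnj (K $$ (j,b))"
      unfolding 1 2 using re b' by (auto intro!: sum.cong)
  qed
  also have "\<dots> = (\<Sum>b<n. \<Sum>a<n. \<Sum>t\<in>T. K $$ (i,a) * y t a * (cnj (K $$ (j,b)) * cnj (y t b)))"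
    by (simp add: sum_distrib_left sum_distrib_right mult_ac)
  also have "\<dots> = (\<Sum>t\<in>T. \<Sum>a<n. \<Sum>b<n. K $$ (i,a) * y t a * (cnj (K $$ (j,b)) * cnj (y t b)))"
    by (rule sum3_swap)
  also have "\<dots> = (\<Sum>t\<in>T. mv K n (y t) i * cnj (mv K n (y t) j))"
    unfolding mv_def by (simp add: sum_product cnj_sum)
  finally show ?thesis .
qed

lemma channel_rep:
  assumes Ks: "\<forall>K\<in>set Ks. K \<in> carrier_mat r n" and rho: "rep n \<rho> T y"
  shows "rep r (apply_channel r Ks \<rho>) ({..<length Ks} \<times> T) (\<lambda>(k,t). mv (Ks!k) n (y t))"
proof -
  have rc: "\<rho> \<in> carrier_mat n n" and fin: "finite T" using rho unfolding rep_def by auto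
  have car: "\<forall>M\<in>set (map (\<lambda>K. K * \<rho> * dagger K) Ks). M \<in> carrier_mat r r"
  proof
    fix M assume "M \<in> set (map (\<lambda>K. K * \<rho> * dagger K) Ks)"
    then obtain K where K: "K \<in> set Ks" "M = K * \<rho> * dagger K" by auto
    then have "K \<in> carrier_mat r n" using Ks by auto
    then show "M \<in> carrier_mat r r" using K(2) rc dagger_carrier[of K r n] by auto
  qed
  note sm = sum_mats_idx[OF car]
  have sm1: "apply_channel r Ks \<rho> \<in> carrier_mat r r" using sm unfolding apply_channel_def by (rule conjunct1)
  have sm2: "\<forall>i<r. \<forall>j<r. apply_channel r Ks \<rho> $$ (i,j) =
      (\<Sum>k<length (map (\<lambda>K. K * \<rho> * dagger K) Ks). (map (\<lambda>K. K * \<rho> * dagger K) Ks ! k) $$ (i,j))"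
    using sm unfolding apply_channel_def by (rule conjunct2)
  show ?thesis unfolding rep_def
  proof (intro conjI allI impI)
    show "apply_channel r Ks \<rho> \<in> carrier_mat r r" by (rule sm1)
    show "finite ({..<length Ks} \<times> T)" using fin by auto
    fix i j assume ij: "i < r" "j < r"
    have "apply_channel r Ks \<rho> $$ (i,j) = (\<Sum>k<length Ks. (Ks!k * \<rho> * dagger (Ks!k)) $$ (i,j))"
      using sm2 ij by simp
    also have "\<dots> = (\<Sum>k<length Ks. \<Sum>t\<in>T. mv (Ks!k) n (y t) i * cnj (mv (Ks!k) n (y t) j))"
    proof (rule sum.cong[OF refl])
      fix k assume "k \<in> {..<length Ks}"
      then have "Ks!k \<in> carrier_mat r n" using Ks by auto
      then show "(Ks!k * \<rho> * dagger (Ks!k)) $$ (i,j) = (\<Sum>t\<in>T. mv (Ks!k) n (y t) i * cnj (mv (Ks!k) n (y t) j))"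
        by (rule conj_rank1[OF _ rho ij])
    qed
    also have "\<dots> = (\<Sum>(k,t)\<in>{..<length Ks} \<times> T. mv (Ks!k) n (y t) i * cnj (mv (Ks!k) n (y t) j))"
      by (rule sum.cartesian_product)
    also have "\<dots> = (\<Sum>t\<in>{..<length Ks} \<times> T.
        (case t of (k,t) \<Rightarrow> mv (Ks!k) n (y t)) i * cnj ((case t of (k,t) \<Rightarrow> mv (Ks!k) n (y t)) j))"
      by (rule sum.cong) (auto simp: case_prod_beta)
    finally show "apply_channel r Ks \<rho> $$ (i,j) = (\<Sum>t\<in>{..<length Ks} \<times> T.
        (case t of (k,t) \<Rightarrow> mv (Ks!k) n (y t)) i * cnj ((case t of (k,t) \<Rightarrow> mv (Ks!k) n (y t)) j))" .
  qed
qed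

lemma trace_rep:
  assumes rho: "rep n M T y" and A: "A \<in> carrier_mat n n"
  shows "mtrace (A * M) = (\<Sum>t\<in>T. qf n A (y t))"
proof -
  have rc: "M \<in> carrier_mat n n" and re: "\<forall>a<n. \<forall>b<n. M $$ (a,b) = (\<Sum>t\<in>T. y t a * cnj (y t b))"
    using rho unfolding rep_def by auto
  have "dim_row (A * M) = n" using A by simp
  then have "mtrace (A * M) = (\<Sum>i<n. (A * M) $$ (i,i))" unfolding mtrace_def by simp
  also have "\<dots> = (\<Sum>i<n. \<Sum>l<n. A $$ (i,l) * (\<Sum>t\<in>T. y t l * cnj (y t i)))"
  proof (rule sum.cong[OF refl])
    fix i assume "i \<in> {..<n}"
    then have i: "i < n" by simp
    show "(A * M) $$ (i,i) = (\<Sum>l<n. A $$ (i,l) * (\<Sum>t\<in>T. y t l * cnj (y t i)))"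
      unfolding mult_idx[OF A rc i i] using re i by (auto intro!: sum.cong)
  qed
  also have "\<dots> = (\<Sum>i<n. \<Sum>l<n. \<Sum>t\<in>T. cnj (y t i) * (A $$ (i,l) * y t l))"
    by (simp add: sum_distrib_left mult_ac)
  also have "\<dots> = (\<Sum>t\<in>T. \<Sum>i<n. \<Sum>l<n. cnj (y t i) * (A $$ (i,l) * y t l))" by (rule sum3_swap2)
  also have "\<dots> = (\<Sum>t\<in>T. qf n A (y t))"
    unfolding qf_def ip_def mv_def by (simp add: sum_distrib_left)
  finally show ?thesis .
qed

lemma mtrace_rep:
  assumes rho: "rep n M T y"
  shows "mtrace M = (\<Sum>t\<in>T. \<Sum>i<n. cnj (y t i) * y t i)"
proof -
  have rc: "M \<in> carrier_mat n n" and re: "\<forall>a<n. \<forall>b<n. M $$ (a,b) = (\<Sum>t\<in>T. y t a * cnj (y t b))"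
    using rho unfolding rep_def by auto
  have "mtrace M = (\<Sum>i<n. \<Sum>t\<in>T. cnj (y t i) * y t i)"
    unfolding mtrace_def using rc re by (auto intro!: sum.cong simp: mult.commute)
  also have "\<dots> = (\<Sum>t\<in>T. \<Sum>i<n. cnj (y t i) * y t i)" by (rule sum.swap)
  finally show ?thesis .
qed

lemma cnj_mult_self: "cnj z * z = of_real ((cmod z)^2)"
  by (metis complex_norm_square mult.commute of_real_power)

lemma Re_cnj_mult_self_nonneg: "0 \<le> Re (cnj z * z)"
  by (simp add: cnj_mult_self)

lemma psd_qf_zero:
  assumes F: "psd n F" and z: "Re (qf n F f) = 0" and i: "i < n"
  shows "mv F n f i = 0"
proof -
  obtain T :: "nat set" and y where r: "rep n F T y" using psd_rep[OF F] by blast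
  have fin: "finite T" and re: "\<forall>a<n. \<forall>b<n. F $$ (a,b) = (\<Sum>t\<in>T. y t a * cnj (y t b))"
    using r unfolding rep_def by auto
  define c where "c t = ip n (y t) f" for t
  have "qf n F f = (\<Sum>a<n. \<Sum>b<n. \<Sum>t\<in>T. cnj (f a) * y t a * (cnj (y t b) * f b))"
    unfolding qf_def ip_def mv_def by (auto simp: re sum_distrib_left sum_distrib_right mult_ac intro!: sum.cong)
  also have "\<dots> = (\<Sum>t\<in>T. \<Sum>a<n. \<Sum>b<n. cnj (f a) * y t a * (cnj (y t b) * f b))" by (rule sum3_swap2)
  also have "\<dots> = (\<Sum>t\<in>T. cnj (c t) * c t)"
    unfolding c_def ip_def by (simp add: sum_product cnj_sum mult_ac) (rule sum.cong[OF refl], rule sum.swap)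
  finally have "Re (qf n F f) = (\<Sum>t\<in>T. Re (cnj (c t) * c t))" by simp
  then have "(\<Sum>t\<in>T. Re (cnj (c t) * c t)) = 0" using z by simp
  moreover have nn: "\<And>t. t \<in> T \<Longrightarrow> 0 \<le> Re (cnj (c t) * c t)" using Re_cnj_mult_self_nonneg by blast
  ultimately have "\<forall>t\<in>T. Re (cnj (c t) * c t) = 0"
    using sum_nonneg_eq_0_iff[OF fin, of "\<lambda>t. Re (cnj (c t) * c t)"] by auto
  then have c0: "\<forall>t\<in>T. c t = 0" by (simp add: cnj_mult_self)
  have "mv F n f i = (\<Sum>b<n. \<Sum>t\<in>T. y t i * (cnj (y t b) * f b))"
    unfolding mv_def using i by (auto simp: re sum_distrib_left mult_ac intro!: sum.cong)
  also have "\<dots> = (\<Sum>t\<in>T. y t i * c t)"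
    unfolding c_def ip_def by (subst sum.swap) (simp add: sum_distrib_left)
  also have "\<dots> = 0" using c0 by simp
  finally show ?thesis .
qed

lemma kraus_norm:
  assumes K: "kraus_channel n r Ks"
  shows "(\<Sum>k<length Ks. \<Sum>i<r. cnj (mv (Ks!k) n f i) * mv (Ks!k) n f i) = (\<Sum>c<n. cnj (f c) * f c)"
proof -
  have Kc: "\<forall>K\<in>set Ks. K \<in> carrier_mat r n" and S: "sum_mats n n (map (\<lambda>K. dagger K * K) Ks) = 1\<^sub>m n"
    using K unfolding kraus_channel_def by auto
  have car: "\<forall>M\<in>set (map (\<lambda>K. dagger K * K) Ks). M \<in> carrier_mat n n"
  proof
    fix M assume "M \<in> set (map (\<lambda>K. dagger K * K) Ks)"
    then obtain K where "K \<in> set Ks" "M = dagger K * K" by auto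
    then show "M \<in> carrier_mat n n" using Kc dagger_carrier[of K r n] by auto
  qed
  note sm = sum_mats_idx[OF car]
  have delta: "(\<Sum>k<length Ks. \<Sum>i<r. cnj ((Ks!k) $$ (i,c)) * (Ks!k) $$ (i,c')) = (if c' = c then 1 else 0)"
    if "c < n" "c' < n" for c c'
  proof -
    have "(if c' = c then 1 else 0) = sum_mats n n (map (\<lambda>K. dagger K * K) Ks) $$ (c,c')"
      using S that by auto
    also have "\<dots> = (\<Sum>k<length Ks. (dagger (Ks!k) * (Ks!k)) $$ (c,c'))" using sm that by simp
    also have "\<dots> = (\<Sum>k<length Ks. \<Sum>i<r. cnj ((Ks!k) $$ (i,c)) * (Ks!k) $$ (i,c'))"
    proof (rule sum.cong[OF refl])
      fix k assume "k \<in> {..<length Ks}"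
      then have Kk: "Ks!k \<in> carrier_mat r n" using Kc by auto
      show "(dagger (Ks!k) * (Ks!k)) $$ (c,c') = (\<Sum>i<r. cnj ((Ks!k) $$ (i,c)) * (Ks!k) $$ (i,c'))"
        unfolding mult_idx[OF dagger_carrier[OF Kk] Kk that] using dagger_idx[OF Kk that(1)] by simp
    qed
    finally show ?thesis by simp
  qed
  have "(\<Sum>k<length Ks. \<Sum>i<r. cnj (mv (Ks!k) n f i) * mv (Ks!k) n f i)
      = (\<Sum>k<length Ks. \<Sum>i<r. \<Sum>c<n. \<Sum>c'<n. cnj (f c) * f c' * (cnj ((Ks!k) $$ (i,c)) * (Ks!k) $$ (i,c')))"
  proof (rule sum.cong[OF refl], rule sum.cong[OF refl])
    fix k i
    show "cnj (mv (Ks!k) n f i) * mv (Ks!k) n f i = (\<Sum>c<n. \<Sum>c'<n. cnj (f c) * f c' * (cnj ((Ks!k) $$ (i,c)) * (Ks!k) $$ (i,c')))"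
      unfolding mv_def cnj_sum sum_product by (rule sum.cong[OF refl], rule sum.cong[OF refl]) (simp add: mult_ac)
  qed
  also have "\<dots> = (\<Sum>c<n. \<Sum>c'<n. \<Sum>k<length Ks. \<Sum>i<r. cnj (f c) * f c' * (cnj ((Ks!k) $$ (i,c)) * (Ks!k) $$ (i,c')))"
    by (rule sum4_swap)
  also have "\<dots> = (\<Sum>c<n. \<Sum>c'<n. cnj (f c) * f c' * (if c' = c then 1 else 0))"
  proof (rule sum.cong[OF refl], rule sum.cong[OF refl])
    fix c c' assume "c \<in> {..<n}" "c' \<in> {..<n}"
    then show "(\<Sum>k<length Ks. \<Sum>i<r. cnj (f c) * f c' * (cnj ((Ks!k) $$ (i,c)) * (Ks!k) $$ (i,c'))) = cnj (f c) * f c' * (if c' = c then 1 else 0)"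
      using delta[of c c'] by (simp add: sum_distrib_left[symmetric])
  qed
  also have "\<dots> = (\<Sum>c<n. cnj (f c) * f c)"
    by (rule sum.cong[OF refl]) (simp add: sum_mult_delta)
  finally show ?thesis .
qed

lemma ip_conj: "ip N g f = cnj (ip N f g)"
  unfolding ip_def by (simp add: cnj_sum mult.commute)

lemma ip_sum_right: "ip N f (\<lambda>i. \<Sum>a\<in>A. c a * g a i) = (\<Sum>a\<in>A. c a * ip N f (g a))"
  unfolding ip_def by (simp add: sum_distrib_left mult_ac) (rule sum.swap)

lemma ip_sum_left: "ip N (\<lambda>i. \<Sum>a\<in>A. c a * g a i) f = (\<Sum>a\<in>A. cnj (c a) * ip N (g a) f)"
  unfolding ip_def by (simp add: cnj_sum sum_distrib_left sum_distrib_right mult_ac) (rule sum.swap)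

lemma ip_diff_right: "ip N f (\<lambda>i. g i - h i) = ip N f g - ip N f h"
  unfolding ip_def by (simp add: right_diff_distrib sum_subtractf)

lemma ip_add_right: "ip N f (\<lambda>i. g i + h i) = ip N f g + ip N f h"
  unfolding ip_def by (simp add: distrib_left sum.distrib)

lemma ip_diff_left: "ip N (\<lambda>i. g i - h i) f = ip N g f - ip N h f"
  unfolding ip_def by (simp add: left_diff_distrib sum_subtractf)

lemma ip_scale_left: "ip N (\<lambda>i. c * g i) f = cnj c * ip N g f"
  unfolding ip_def by (simp add: sum_distrib_left mult_ac)

lemma ip_scale_right: "ip N f (\<lambda>i. c * g i) = c * ip N f g"
  unfolding ip_def by (simp add: sum_distrib_left mult_ac)

lemma ip_cong: "(\<And>i. i < N \<Longrightarrow> f i = f' i) \<Longrightarrow> (\<And>i. i < N \<Longrightarrow> g i = g' i) \<Longrightarrow> ip N f g = ip N f' g'"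
  unfolding ip_def by (rule sum.cong) auto

lemma ip_self_real: "ip N f f = of_real (\<Sum>i<N. (cmod (f i))^2)"
  unfolding ip_def by (simp add: cnj_mult_self)

lemma ip_self_zero: "ip N f f = 0 \<Longrightarrow> i < N \<Longrightarrow> f i = 0"
proof -
  assume z: "ip N f f = 0" and i: "i < N"
  have "(\<Sum>i<N. (cmod (f i))^2) = 0" using z unfolding ip_self_real by (simp only: of_real_eq_0_iff)
  then have "\<forall>i\<in>{..<N}. (cmod (f i))^2 = 0" by (subst sum_nonneg_eq_0_iff[symmetric]) auto
  then show "f i = 0" using i by auto
qed

definition orthonormal :: "nat \<Rightarrow> (nat \<Rightarrow> complex) list \<Rightarrow> bool" where
  "orthonormal N es \<longleftrightarrow> (\<forall>a<length es. \<forall>b<length es. ip N (es!a) (es!b) = (if a = b then 1 else 0))"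

lemma orthonormalize:
  "\<exists>es. orthonormal N es \<and>
     (\<forall>x\<in>set xs. \<forall>i<N. x i = (\<Sum>a<length es. ip N (es!a) x * (es!a) i)) \<and>
     (\<forall>z. (\<forall>x\<in>set xs. ip N x z = 0) \<longrightarrow> (\<forall>a<length es. ip N (es!a) z = 0))"
proof (induction xs)
  case Nil
  show ?case by (intro exI[of _ "[]"]) (simp add: orthonormal_def)
next
  case (Cons x xs)
  then obtain es where ON: "orthonormal N es"
    and RC: "\<forall>x\<in>set xs. \<forall>i<N. x i = (\<Sum>a<length es. ip N (es!a) x * (es!a) i)"
    and OZ: "\<forall>z. (\<forall>x\<in>set xs. ip N x z = 0) \<longrightarrow> (\<forall>a<length es. ip N (es!a) z = 0)" by blast
  define m where "m = length es"
  define S where "S = (\<lambda>i. \<Sum>a<m. ip N (es!a) x * (es!a) i)"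
  define r where "r = (\<lambda>i. x i - S i)"
  have xrS: "x = (\<lambda>i. r i + S i)" unfolding r_def by simp
  have ONe: "ip N (es!b) (es!a) = (if a = b then 1 else 0)" if "a < m" "b < m" for a b
    using ON that unfolding orthonormal_def m_def by auto
  have ipS: "ip N (es!b) S = ip N (es!b) x" if "b < m" for b
  proof -
    have "ip N (es!b) S = (\<Sum>a<m. ip N (es!a) x * (if a = b then 1 else 0))"
      unfolding S_def ip_sum_right using ONe[OF _ that] by (intro sum.cong) auto
    also have "\<dots> = ip N (es!b) x" using that by (simp add: sum_mult_delta)
    finally show ?thesis .
  qed
  have ipr: "ip N (es!b) r = 0" if "b < m" for b
    unfolding r_def ip_diff_right ipS[OF that] by simp
  have ipr': "ip N r (es!b) = 0" if "b < m" for b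
    using ipr[OF that] ip_conj[of N r "es!b"] by simp
  show ?case
  proof (cases "ip N r r = 0")
    case True
    then have r0: "\<forall>i<N. r i = 0" using ip_self_zero by blast
    show ?thesis
    proof (intro exI[of _ es] conjI)
      show "orthonormal N es" by (rule ON)
      show "\<forall>y\<in>set (x # xs). \<forall>i<N. y i = (\<Sum>a<length es. ip N (es!a) y * (es!a) i)"
        using RC r0 unfolding r_def S_def m_def by auto
      show "\<forall>z. (\<forall>y\<in>set (x # xs). ip N y z = 0) \<longrightarrow> (\<forall>a<length es. ip N (es!a) z = 0)"
        using OZ by auto
    qed
  next
    case False
    define c where "c = sqrt (\<Sum>i<N. (cmod (r i))^2)"
    have cpos: "c > 0"
    proof -
      have "(\<Sum>i<N. (cmod (r i))^2) \<noteq> 0" using False unfolding ip_self_real of_real_eq_0_iff .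
      moreover have "(\<Sum>i<N. (cmod (r i))^2) \<ge> 0" by (simp add: sum_nonneg)
      ultimately show ?thesis unfolding c_def by simp
    qed
    have rr: "ip N r r = of_real c * of_real c"
      unfolding ip_self_real c_def by (simp add: sum_nonneg flip: of_real_mult)
    define e where "e = (\<lambda>i. (1 / of_real c) * r i)"
    have ipae: "ip N (es!a) e = 0" if "a < m" for a
      unfolding e_def ip_scale_right ipr[OF that] by simp
    have ipea: "ip N e (es!a) = 0" if "a < m" for a
      using ipae[OF that] ip_conj[of N e "es!a"] by simp
    have ipee: "ip N e e = 1"
      unfolding e_def ip_scale_left ip_scale_right rr using cpos by simp
    have ipeS: "ip N e S = 0"
      unfolding S_def ip_sum_right using ipea by simp
    have iper: "ip N e r = of_real c"
      unfolding e_def ip_scale_left rr using cpos by simp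
    have ipex: "ip N e x = of_real c"
      by (subst xrS) (simp add: ip_add_right iper ipeS)
    define es' where "es' = es @ [e]"
    have len: "length es' = Suc m" unfolding es'_def m_def by simp
    have nth1: "es'!a = es!a" if "a < m" for a unfolding es'_def using that m_def by (simp add: nth_append)
    have nth2: "es'!m = e" unfolding es'_def m_def by simp
    have sumes': "(\<Sum>a<length es'. f a) = (\<Sum>a<m. f a) + f m" for f :: "nat \<Rightarrow> complex"
      unfolding len by simp
    show ?thesis
    proof (intro exI[of _ es'] conjI)
      show "orthonormal N es'"
        unfolding orthonormal_def len
      proof (intro allI impI)
        fix a b assume a: "a < Suc m" and b: "b < Suc m"
        show "ip N (es'!a) (es'!b) = (if a = b then 1 else 0)"
        proof (cases "a < m")
          case True
          then show ?thesis
          proof (cases "b < m")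
            case True
            then show ?thesis using \<open>a < m\<close> nth1 ON unfolding orthonormal_def m_def by auto
          next
            case False
            then have "b = m" using b by simp
            then show ?thesis using \<open>a < m\<close> nth1 nth2 ipae by auto
          qed
        next
          case False
          then have am: "a = m" using a by simp
          then show ?thesis
          proof (cases "b < m")
            case True
            then show ?thesis using am nth1 nth2 ipea by auto
          next
            case False
            then have "b = m" using b by simp
            then show ?thesis using am nth2 ipee by auto
          qed
        qed
      qed
      show "\<forall>y\<in>set (x # xs). \<forall>i<N. y i = (\<Sum>a<length es'. ip N (es'!a) y * (es'!a) i)"
      proof (intro ballI allI impI)
        fix y i assume y: "y \<in> set (x # xs)" and i: "i < N"
        have eq1: "(\<Sum>a<length es'. ip N (es'!a) y * (es'!a) i) = S' + ip N e y * e i"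
          if "S' = (\<Sum>a<m. ip N (es!a) y * (es!a) i)" for S'
          unfolding sumes' that nth2 using nth1 by simp
        show "y i = (\<Sum>a<length es'. ip N (es'!a) y * (es'!a) i)"
        proof (cases "y = x")
          case True
          have "ip N e x * e i = r i" unfolding ipex unfolding e_def using cpos by simp
          then show ?thesis using eq1[OF refl] True r_def S_def by simp
        next
          case False
          then have yxs: "y \<in> set xs" using y by simp
          have yrep: "y = (\<lambda>i. if i < N then (\<Sum>a<m. ip N (es!a) y * (es!a) i) else y i)"
            using RC yxs unfolding m_def by auto
          have "ip N e y = ip N e (\<lambda>i. \<Sum>a<m. ip N (es!a) y * (es!a) i)"
            by (rule ip_cong) (use RC yxs m_def in auto)
          also have "\<dots> = 0" unfolding ip_sum_right using ipea by simp
          finally show ?thesis unfolding eq1[OF refl] using RC yxs i m_def by simp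
        qed
      qed
      show "\<forall>z. (\<forall>y\<in>set (x # xs). ip N y z = 0) \<longrightarrow> (\<forall>a<length es'. ip N (es'!a) z = 0)"
      proof (intro allI impI)
        fix z a assume z: "\<forall>y\<in>set (x # xs). ip N y z = 0" and a: "a < length es'"
        have old: "\<forall>a<m. ip N (es!a) z = 0" using OZ z m_def by auto
        show "ip N (es'!a) z = 0"
        proof (cases "a < m")
          case True then show ?thesis using old nth1 by simp
        next
          case False
          then have "a = m" using a len by simp
          have "ip N r z = ip N x z - ip N S z" unfolding r_def ip_diff_left ..
          also have "ip N S z = (\<Sum>b<m. cnj (ip N (es!b) x) * ip N (es!b) z)"
            unfolding S_def ip_sum_left ..
          also have "\<dots> = 0" using old by simp
          finally have "ip N r z = 0" using z by simp
          then have "ip N e z = 0" unfolding e_def ip_scale_left by simp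
          then show ?thesis using \<open>a = m\<close> nth2 by simp
        qed
      qed
    qed
  qed
qed

definition is_proj :: "nat \<Rightarrow> complex mat \<Rightarrow> bool" where
  "is_proj N Q \<longleftrightarrow> Q \<in> carrier_mat N N \<and> dagger Q = Q \<and> Q * Q = Q"

lemma proj_herm: "is_proj N Q \<Longrightarrow> i < N \<Longrightarrow> j < N \<Longrightarrow> Q $$ (j,i) = cnj (Q $$ (i,j))"
proof -
  assume Q: "is_proj N Q" and ij: "i < N" "j < N"
  have c: "Q \<in> carrier_mat N N" "dagger Q = Q" using Q unfolding is_proj_def by auto
  have "dagger Q $$ (j,i) = cnj (Q $$ (i,j))" using dagger_idx[OF c(1) ij(2) ij(1)] .
  then show ?thesis using c(2) by simp
qed

lemma proj_idem: "is_proj N Q \<Longrightarrow> i < N \<Longrightarrow> j < N \<Longrightarrow> (\<Sum>l<N. Q $$ (i,l) * Q $$ (l,j)) = Q $$ (i,j)"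
proof -
  assume Q: "is_proj N Q" and ij: "i < N" "j < N"
  have c: "Q \<in> carrier_mat N N" "Q * Q = Q" using Q unfolding is_proj_def by auto
  have "(Q * Q) $$ (i,j) = (\<Sum>l<N. Q $$ (i,l) * Q $$ (l,j))" by (rule mult_idx[OF c(1) c(1) ij])
  then show ?thesis using c(2) by simp
qed

lemma proj_qf: assumes Q: "is_proj N Q" shows "qf N Q f = ip N (mv Q N f) (mv Q N f)"
proof -
  have "qf N Q f = (\<Sum>i<N. \<Sum>l<N. cnj (f i) * Q $$ (i,l) * f l)"
    unfolding qf_def ip_def mv_def by (simp add: sum_distrib_left mult_ac)
  also have "\<dots> = (\<Sum>i<N. \<Sum>l<N. \<Sum>m<N. cnj (f i) * (cnj (Q $$ (m,i)) * Q $$ (m,l)) * f l)"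
  proof (rule sum.cong[OF refl], rule sum.cong[OF refl])
    fix i l assume "i \<in> {..<N}" "l \<in> {..<N}"
    then have il: "i < N" "l < N" by auto
    have "Q $$ (i,l) = (\<Sum>m<N. Q $$ (i,m) * Q $$ (m,l))" using proj_idem[OF Q il] by simp
    also have "\<dots> = (\<Sum>m<N. cnj (Q $$ (m,i)) * Q $$ (m,l))"
    proof (rule sum.cong[OF refl])
      fix m assume "m \<in> {..<N}"
      then have m: "m < N" by simp
      show "Q $$ (i,m) * Q $$ (m,l) = cnj (Q $$ (m,i)) * Q $$ (m,l)" using proj_herm[OF Q m il(1)] by simp
    qed
    finally have "Q $$ (i,l) = (\<Sum>m<N. cnj (Q $$ (m,i)) * Q $$ (m,l))" .
    then show "cnj (f i) * Q $$ (i,l) * f l = (\<Sum>m<N. cnj (f i) * (cnj (Q $$ (m,i)) * Q $$ (m,l)) * f l)"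
      by (simp add: sum_distrib_left sum_distrib_right)
  qed
  also have "\<dots> = (\<Sum>m<N. \<Sum>i<N. \<Sum>l<N. cnj (f i) * (cnj (Q $$ (m,i)) * Q $$ (m,l)) * f l)"
    by (rule sum3_swap2)
  also have "\<dots> = ip N (mv Q N f) (mv Q N f)"
    unfolding ip_def mv_def cnj_sum sum_product by (intro sum.cong refl) (simp add: mult_ac)
  finally show ?thesis .
qed

lemma proj_qf_nonneg: "is_proj N Q \<Longrightarrow> 0 \<le> Re (qf N Q f)"
  unfolding proj_qf by (simp add: ip_self_real sum_nonneg)

lemma proj_psd: assumes Q: "is_proj N Q" shows "psd N Q"
proof -
  have c: "Q \<in> carrier_mat N N" "dagger Q = Q" using Q unfolding is_proj_def by auto
  show ?thesis unfolding psd_def using c psd_sum_qf[OF c(1)] proj_qf_nonneg[OF Q] by auto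
qed

lemma proj_compl: assumes Q: "is_proj N Q" shows "is_proj N (1\<^sub>m N - Q)"
proof -
  have c: "Q \<in> carrier_mat N N" "dagger Q = Q" "Q * Q = Q" using Q unfolding is_proj_def by auto
  have car: "1\<^sub>m N - Q \<in> carrier_mat N N" using c by auto
  have d: "dagger (1\<^sub>m N - Q) = 1\<^sub>m N - Q"
  proof (rule eq_matI)
    fix i j assume "i < dim_row (1\<^sub>m N - Q)" "j < dim_col (1\<^sub>m N - Q)"
    then have ij: "i < N" "j < N" using car by auto
    show "dagger (1\<^sub>m N - Q) $$ (i,j) = (1\<^sub>m N - Q) $$ (i,j)"
      unfolding dagger_idx[OF car ij] using ij c proj_herm[OF Q ij] by auto
  qed (use car c in \<open>auto simp: dagger_def\<close>)
  have "(1\<^sub>m N - Q) * (1\<^sub>m N - Q) = 1\<^sub>m N * (1\<^sub>m N - Q) - Q * (1\<^sub>m N - Q)"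
    by (rule minus_mult_distrib_mat[OF one_carrier_mat c(1) car])
  also have "\<dots> = (1\<^sub>m N - Q) - (Q * 1\<^sub>m N - Q * Q)"
    using mult_minus_distrib_mat[OF c(1) one_carrier_mat c(1)] left_mult_one_mat[OF car] by simp
  also have "\<dots> = 1\<^sub>m N - Q"
  proof -
    have q1: "Q * 1\<^sub>m N = Q" using c(1) by simp
    show ?thesis unfolding q1 c(3) by (rule eq_matI) (use c(1) in auto)
  qed
  finally show ?thesis unfolding is_proj_def using car d by auto
qed

lemma mtrace_minus: "A \<in> carrier_mat N N \<Longrightarrow> B \<in> carrier_mat N N \<Longrightarrow> mtrace (A - B) = mtrace A - mtrace B"
  unfolding mtrace_def by (simp add: sum_subtractf)

lemma mtrace_compl: "Q \<in> carrier_mat N N \<Longrightarrow> M \<in> carrier_mat N N \<Longrightarrow>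
    mtrace ((1\<^sub>m N - Q) * M) = mtrace M - mtrace (Q * M)"
proof -
  assume Q: "Q \<in> carrier_mat N N" and M: "M \<in> carrier_mat N N"
  have "(1\<^sub>m N - Q) * M = 1\<^sub>m N * M - Q * M" by (rule minus_mult_distrib_mat[OF one_carrier_mat Q M])
  then have "(1\<^sub>m N - Q) * M = M - Q * M" using M by simp
  then show ?thesis using mtrace_minus[of M N "Q * M"] Q M by simp
qed

lemma mtrace_mult_minus: "Q \<in> carrier_mat N N \<Longrightarrow> A \<in> carrier_mat N N \<Longrightarrow> B \<in> carrier_mat N N \<Longrightarrow>
    mtrace (Q * (A - B)) = mtrace (Q * A) - mtrace (Q * B)"
  using mult_minus_distrib_mat[of Q N N A N B] mtrace_minus[of "Q * A" N "Q * B"] by simp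

definition projm :: "nat \<Rightarrow> (nat \<Rightarrow> complex) list \<Rightarrow> complex mat" where
  "projm N es = Matrix.mat N N (\<lambda>(i,j). \<Sum>a<length es. (es!a) i * cnj ((es!a) j))"

lemma projm_mv: "i < N \<Longrightarrow> mv (projm N es) N x i = (\<Sum>a<length es. ip N (es!a) x * (es!a) i)"
  unfolding mv_def projm_def ip_def
  by (simp add: sum_distrib_left sum_distrib_right mult_ac) (rule sum.swap)

lemma projm_proj: assumes ON: "orthonormal N es" shows "is_proj N (projm N es)"
proof -
  let ?P = "projm N es"
  have car: "?P \<in> carrier_mat N N" unfolding projm_def by simp
  have d: "dagger ?P = ?P"
    by (rule eq_matI) (auto simp: dagger_def projm_def cnj_sum mult.commute)
  have ONe: "ip N (es!a) (es!b) = (if b = a then 1 else 0)" if "a < length es" "b < length es" for a b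
    using ON that unfolding orthonormal_def by auto
  have pp: "?P * ?P = ?P"
  proof (rule eq_matI)
    fix i j assume "i < dim_row ?P" "j < dim_col ?P"
    then have ij: "i < N" "j < N" using car by auto
    have "(?P * ?P) $$ (i,j) = (\<Sum>l<N. ?P $$ (i,l) * ?P $$ (l,j))" by (rule mult_idx[OF car car ij])
    also have "\<dots> = (\<Sum>l<N. \<Sum>a<length es. \<Sum>b<length es. (es!a) i * (cnj ((es!a) l) * (es!b) l) * cnj ((es!b) j))"
      using ij unfolding projm_def by (simp add: sum_product) (intro sum.cong refl, simp add: mult_ac)
    also have "\<dots> = (\<Sum>a<length es. \<Sum>b<length es. \<Sum>l<N. (es!a) i * (cnj ((es!a) l) * (es!b) l) * cnj ((es!b) j))"
    proof -
      have "(\<Sum>l<N. \<Sum>a<length es. \<Sum>b<length es. (es!a) i * (cnj ((es!a) l) * (es!b) l) * cnj ((es!b) j))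
        = (\<Sum>a<length es. \<Sum>l<N. \<Sum>b<length es. (es!a) i * (cnj ((es!a) l) * (es!b) l) * cnj ((es!b) j))"
        by (rule sum.swap)
      also have "\<dots> = (\<Sum>a<length es. \<Sum>b<length es. \<Sum>l<N. (es!a) i * (cnj ((es!a) l) * (es!b) l) * cnj ((es!b) j))"
        by (rule sum.cong[OF refl], rule sum.swap)
      finally show ?thesis .
    qed
    also have "\<dots> = (\<Sum>a<length es. \<Sum>b<length es. (es!a) i * ip N (es!a) (es!b) * cnj ((es!b) j))"
      unfolding ip_def by (simp add: sum_distrib_left sum_distrib_right)
    also have "\<dots> = (\<Sum>a<length es. \<Sum>b<length es. ((es!a) i * cnj ((es!b) j)) * (if b = a then 1 else 0))"
      by (intro sum.cong refl) (simp add: ONe)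
    also have "\<dots> = (\<Sum>a<length es. (es!a) i * cnj ((es!a) j))"
      by (intro sum.cong refl) (simp add: sum_mult_delta)
    also have "\<dots> = ?P $$ (i,j)" unfolding projm_def using ij by simp
    finally show "(?P * ?P) $$ (i,j) = ?P $$ (i,j)" .
  qed (use car in auto)
  show ?thesis unfolding is_proj_def using car d pp by auto
qed

lemma sum_lessThan_add: "(\<Sum>l<m+(d::nat). (g l :: 'a::comm_monoid_add)) = (\<Sum>l<m. g l) + (\<Sum>b<d. g (m+b))"
  by (induction d) (simp_all add: add_ac)

lemma sum_split_prod: "(\<Sum>l<(n::nat)*d. (g l :: 'a::comm_monoid_add)) = (\<Sum>a<n. \<Sum>b<d. g (a*d+b))"
proof (induction n)
  case 0 then show ?case by simp
next
  case (Suc n)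
  have e: "Suc n * d = n * d + d" by simp
  show ?case unfolding e sum_lessThan_add Suc.IH by simp
qed

lemma kron_one_idx:
  assumes K: "K \<in> carrier_mat r n" and i: "i < r*d" and l: "l < n*d"
  shows "kron K (1\<^sub>m d) $$ (i,l) = K $$ (i div d, l div d) * (if i mod d = l mod d then 1 else 0)"
proof -
  have d: "d > 0" using i by (cases d) auto
  have "i mod d < d" "l mod d < d" using d by auto
  then show ?thesis unfolding kron_def using K i l by auto
qed

lemma kron_carrier: "K \<in> carrier_mat r n \<Longrightarrow> kron K (1\<^sub>m d) \<in> carrier_mat (r*d) (n*d)"
  unfolding kron_def by auto

lemma kron_mv:
  assumes K: "K \<in> carrier_mat r n" and J: "J < d" and i: "i < r*d"
  shows "mv (kron K (1\<^sub>m d)) (n*d) (\<lambda>l. if l mod d = J then v (l div d) else 0) i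
       = (if i mod d = J then mv K n v (i div d) else 0)"
proof -
  have d: "d > 0" using J by auto
  define p where "p = i mod d"
  define q where "q = i div d"
  have p: "p < d" using d unfolding p_def by auto
  have "mv (kron K (1\<^sub>m d)) (n*d) (\<lambda>l. if l mod d = J then v (l div d) else 0) i
      = (\<Sum>a<n. \<Sum>b<d. kron K (1\<^sub>m d) $$ (i, a*d+b) * (if (a*d+b) mod d = J then v ((a*d+b) div d) else 0))"
    unfolding mv_def by (rule sum_split_prod)
  also have "\<dots> = (\<Sum>a<n. \<Sum>b<d. K $$ (q,a) * (if p = b then 1 else 0) * (if b = J then v a else 0))"
  proof (intro sum.cong refl)
    fix a b assume a: "a \<in> {..<n}" and b: "b \<in> {..<d}"
    have ab: "a*d+b < n*d"
    proof -
      have "a*d + b < a*d + d" using b by simp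
      also have "\<dots> = Suc a * d" by simp
      also have "\<dots> \<le> n * d" using a by (intro mult_right_mono) auto
      finally show ?thesis .
    qed
    have dm: "(a*d+b) div d = a" "(a*d+b) mod d = b" using b d by auto
    show "kron K (1\<^sub>m d) $$ (i, a*d+b) * (if (a*d+b) mod d = J then v ((a*d+b) div d) else 0)
        = K $$ (q,a) * (if p = b then 1 else 0) * (if b = J then v a else 0)"
      unfolding kron_one_idx[OF K i ab] dm p_def q_def by simp
  qed
  also have "\<dots> = (\<Sum>a<n. if p = J then K $$ (q,a) * v a else 0)"
  proof (rule sum.cong[OF refl])
    fix a assume "a \<in> {..<n}"
    show "(\<Sum>b<d. K $$ (q,a) * (if p = b then 1 else 0) * (if b = J then v a else 0))
        = (if p = J then K $$ (q,a) * v a else 0)"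
    proof (cases "p = J")
      case True
      have "(\<Sum>b<d. K $$ (q,a) * (if p = b then 1 else 0) * (if b = J then v a else 0))
          = (\<Sum>b<d. if b = J then K $$ (q,a) * v a else 0)"
        by (rule sum.cong) (auto simp: True)
      then show ?thesis using J True by simp
    next
      case False
      then show ?thesis by (auto intro!: sum.neutral)
    qed
  qed
  also have "\<dots> = (if p = J then mv K n v q else 0)" unfolding mv_def by simp
  finally show ?thesis unfolding p_def q_def .
qed

definition advK :: "nat \<Rightarrow> nat \<Rightarrow> (nat \<Rightarrow> complex) \<Rightarrow> nat \<Rightarrow> complex mat" where
  "advK dpk N' u b = Matrix.mat N' dpk (\<lambda>(i,c). if c = b then u i else 0)"

definition advL :: "nat \<Rightarrow> nat \<Rightarrow> (nat \<Rightarrow> complex) \<Rightarrow> complex mat list" where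
  "advL dpk N' u = map (advK dpk N' u) [0..<dpk]"

lemma advK_carrier: "advK dpk N' u b \<in> carrier_mat N' dpk"
  unfolding advK_def by simp

lemma advL_carrier: "\<forall>K\<in>set (advL dpk N' u). K \<in> carrier_mat N' dpk"
  unfolding advL_def using advK_carrier by auto

lemma adv_kraus:
  assumes u: "(\<Sum>i<N'. cnj (u i) * u i) = 1"
  shows "kraus_channel dpk N' (advL dpk N' u)"
proof -
  let ?L = "map (\<lambda>K. dagger K * K) (advL dpk N' u)"
  have car: "\<forall>M\<in>set ?L. M \<in> carrier_mat dpk dpk"
  proof
    fix M assume "M \<in> set ?L"
    then obtain K where K: "K \<in> set (advL dpk N' u)" "M = dagger K * K" by auto
    then have "K \<in> carrier_mat N' dpk" using advL_carrier by auto
    then show "M \<in> carrier_mat dpk dpk" using K(2) dagger_carrier[of K N' dpk] by auto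
  qed
  note sm = sum_mats_idx[OF car]
  have "sum_mats dpk dpk ?L = 1\<^sub>m dpk"
  proof (rule eq_matI)
    fix c c' assume "c < dim_row (1\<^sub>m dpk)" "c' < dim_col (1\<^sub>m dpk)"
    then have cc: "c < dpk" "c' < dpk" by auto
    have "sum_mats dpk dpk ?L $$ (c,c') = (\<Sum>k<dpk. (dagger (advK dpk N' u k) * advK dpk N' u k) $$ (c,c'))"
      using sm cc unfolding advL_def by simp
    also have "\<dots> = (\<Sum>k<dpk. \<Sum>i<N'. cnj (advK dpk N' u k $$ (i,c)) * advK dpk N' u k $$ (i,c'))"
    proof (rule sum.cong[OF refl])
      fix k assume "k \<in> {..<dpk}"
      show "(dagger (advK dpk N' u k) * advK dpk N' u k) $$ (c,c') = (\<Sum>i<N'. cnj (advK dpk N' u k $$ (i,c)) * advK dpk N' u k $$ (i,c'))"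
        unfolding mult_idx[OF dagger_carrier[OF advK_carrier] advK_carrier cc]
        using dagger_idx[OF advK_carrier cc(1)] by simp
    qed
    also have "\<dots> = (\<Sum>k<dpk. if c = k \<and> c' = k then 1 else 0)"
    proof (rule sum.cong[OF refl])
      fix k assume "k \<in> {..<dpk}"
      have "(\<Sum>i<N'. cnj (advK dpk N' u k $$ (i,c)) * advK dpk N' u k $$ (i,c'))
          = (\<Sum>i<N'. if c = k \<and> c' = k then cnj (u i) * u i else 0)"
        by (rule sum.cong) (use cc in \<open>auto simp: advK_def\<close>)
      also have "\<dots> = (if c = k \<and> c' = k then 1 else 0)" by (cases "c = k \<and> c' = k") (use u in auto)
      finally show "(\<Sum>i<N'. cnj (advK dpk N' u k $$ (i,c)) * advK dpk N' u k $$ (i,c')) = (if c = k \<and> c' = k then 1 else 0)" .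
    qed
    also have "\<dots> = 1\<^sub>m dpk $$ (c,c')"
    proof (cases "c = c'")
      case True
      have "(\<Sum>k<dpk. if c = k \<and> c' = k then 1 else 0) = (\<Sum>k<dpk. if k = c then 1 else (0::complex))"
        by (rule sum.cong) (auto simp: True)
      then show ?thesis using cc True by simp
    next
      case False
      then show ?thesis using cc by (simp add: sum.neutral)
    qed
    finally show "sum_mats dpk dpk ?L $$ (c,c') = 1\<^sub>m dpk $$ (c,c')" .
  qed (use sm in auto)
  then show ?thesis unfolding kraus_channel_def using advL_carrier by auto
qed

lemma adv_apply:
  assumes rho: "\<rho> \<in> carrier_mat dpk dpk" and tr: "mtrace \<rho> = 1"
  shows "rep N' (apply_channel N' (advL dpk N' u) \<rho>) (UNIV :: unit set) (\<lambda>_. u)"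
proof -
  have car: "\<forall>M\<in>set (map (\<lambda>K. K * \<rho> * dagger K) (advL dpk N' u)). M \<in> carrier_mat N' N'"
  proof
    fix M assume "M \<in> set (map (\<lambda>K. K * \<rho> * dagger K) (advL dpk N' u))"
    then obtain K where K: "K \<in> set (advL dpk N' u)" "M = K * \<rho> * dagger K" by auto
    then have "K \<in> carrier_mat N' dpk" using advL_carrier by auto
    then show "M \<in> carrier_mat N' N'" using K(2) rho dagger_carrier[of K N' dpk] by auto
  qed
  note sm = sum_mats_idx[OF car]
  have entry: "(advK dpk N' u b * \<rho> * dagger (advK dpk N' u b)) $$ (i,j) = u i * \<rho> $$ (b,b) * cnj (u j)"
    if b: "b < dpk" and ij: "i < N'" "j < N'" for b i j
  proof -
    let ?K = "advK dpk N' u b"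
    have Kr: "?K * \<rho> \<in> carrier_mat N' dpk" by (rule mult_carrier_mat[OF advK_carrier rho])
    have e1: "(?K * \<rho>) $$ (i,l) = u i * \<rho> $$ (b,l)" if l: "l < dpk" for l
    proof -
      have "(?K * \<rho>) $$ (i,l) = (\<Sum>c<dpk. ?K $$ (i,c) * \<rho> $$ (c,l))" by (rule mult_idx[OF advK_carrier rho ij(1) l])
      also have "\<dots> = (\<Sum>c<dpk. if c = b then u i * \<rho> $$ (b,l) else 0)"
        by (rule sum.cong) (use ij in \<open>auto simp: advK_def\<close>)
      also have "\<dots> = u i * \<rho> $$ (b,l)" using b by simp
      finally show ?thesis .
    qed
    have "(?K * \<rho> * dagger ?K) $$ (i,j) = (\<Sum>l<dpk. (?K * \<rho>) $$ (i,l) * dagger ?K $$ (l,j))"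
      by (rule mult_idx[OF Kr dagger_carrier[OF advK_carrier] ij(1) ij(2)])
    also have "\<dots> = (\<Sum>l<dpk. if l = b then u i * \<rho> $$ (b,b) * cnj (u j) else 0)"
    proof (rule sum.cong[OF refl])
      fix l assume "l \<in> {..<dpk}"
      then have l: "l < dpk" by simp
      show "(?K * \<rho>) $$ (i,l) * dagger ?K $$ (l,j) = (if l = b then u i * \<rho> $$ (b,b) * cnj (u j) else 0)"
        unfolding e1[OF l] dagger_idx[OF advK_carrier l ij(2)] using ij l by (auto simp: advK_def)
    qed
    also have "\<dots> = u i * \<rho> $$ (b,b) * cnj (u j)" using b by simp
    finally show ?thesis .
  qed
  show ?thesis unfolding rep_def
  proof (intro conjI allI impI)
    show "apply_channel N' (advL dpk N' u) \<rho> \<in> carrier_mat N' N'" using sm unfolding apply_channel_def by (rule conjunct1)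
    show "finite (UNIV :: unit set)" by simp
    fix i j assume ij: "i < N'" "j < N'"
    have "apply_channel N' (advL dpk N' u) \<rho> $$ (i,j) = (\<Sum>b<dpk. (advK dpk N' u b * \<rho> * dagger (advK dpk N' u b)) $$ (i,j))"
      using sm ij unfolding apply_channel_def advL_def by simp
    also have "\<dots> = (\<Sum>b<dpk. u i * cnj (u j) * \<rho> $$ (b,b))"
      by (rule sum.cong[OF refl]) (simp add: entry ij mult_ac)
    also have "\<dots> = u i * cnj (u j) * mtrace \<rho>"
      unfolding mtrace_def using rho by (simp add: sum_distrib_left)
    also have "\<dots> = (\<Sum>t\<in>(UNIV :: unit set). u i * cnj (u j))" using tr by simp
    finally show "apply_channel N' (advL dpk N' u) \<rho> $$ (i,j) = (\<Sum>t\<in>(UNIV :: unit set). u i * cnj (u j))" .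
  qed
qed

lemma mv_scale: "mv A n (\<lambda>c. a * f c) = (\<lambda>i. a * mv A n f i)"
  unfolding mv_def by (simp add: sum_distrib_left mult_ac)

lemma mv_compl: "E \<in> carrier_mat n n \<Longrightarrow> i < n \<Longrightarrow> mv (1\<^sub>m n - E) n f i = f i - mv E n f i"
proof -
  assume E: "E \<in> carrier_mat n n" and i: "i < n"
  have "mv (1\<^sub>m n - E) n f i = (\<Sum>l<n. (if i = l then f l else 0) - E $$ (i,l) * f l)"
    unfolding mv_def using E i by (intro sum.cong refl) (auto simp: left_diff_distrib)
  also have "\<dots> = f i - mv E n f i" unfolding mv_def sum_subtractf using i by simp
  finally show ?thesis .
qed

lemma ip_herm: assumes E: "psd n E" shows "ip n g (mv E n h) = ip n (mv E n g) h"
proof -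
  have "ip n g (mv E n h) = (\<Sum>i<n. \<Sum>l<n. cnj (g i) * E $$ (i,l) * h l)"
    unfolding ip_def mv_def by (simp add: sum_distrib_left mult_ac)
  also have "\<dots> = (\<Sum>l<n. \<Sum>i<n. cnj (g i) * E $$ (i,l) * h l)" by (rule sum.swap)
  also have "\<dots> = ip n (mv E n g) h"
    unfolding ip_def mv_def cnj_sum sum_distrib_right
  proof (intro sum.cong refl)
    fix l i assume "l \<in> {..<n}" "i \<in> {..<n}"
    then have li: "l < n" "i < n" by auto
    have "E $$ (i,l) = cnj (E $$ (l,i))" by (rule psd_herm[OF E li])
    then show "cnj (g i) * E $$ (i,l) * h l = cnj (E $$ (l,i) * g i) * h l" by simp
  qed
  finally show ?thesis .
qed

definition wrongE :: "nat \<Rightarrow> complex mat \<Rightarrow> bool \<Rightarrow> complex mat" where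
  "wrongE n E m = (if m then 1\<^sub>m n - E else E)"

lemma wrongE_psd: "povm_elt n E \<Longrightarrow> psd n (wrongE n E m)"
  unfolding povm_elt_def wrongE_def by auto

lemma meas_wrong:
  assumes X: "X \<in> carrier_mat n n" and tr: "mtrace X = 1" and E: "E \<in> carrier_mat n n"
  shows "meas_prob n E m X = 1 - Re (mtrace (wrongE n E m * X))"
proof -
  have c: "mtrace ((1\<^sub>m n - E) * X) = 1 - mtrace (E * X)" using mtrace_compl[OF E X] tr by simp
  show ?thesis unfolding meas_prob_def wrongE_def using c by auto
qed

lemma trace_psd_nonneg:
  assumes r: "rep n X T y" and W: "psd n W"
  shows "Re (mtrace (W * X)) = (\<Sum>t\<in>T. Re (qf n W (y t)))" "0 \<le> Re (mtrace (W * X))"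
proof -
  show e: "Re (mtrace (W * X)) = (\<Sum>t\<in>T. Re (qf n W (y t)))"
    unfolding trace_rep[OF r psd_carrier[OF W]] by simp
  show "0 \<le> Re (mtrace (W * X))" unfolding e using psd_qf[OF W] by (simp add: sum_nonneg)
qed

lemma density_trace: "density n \<rho> \<Longrightarrow> mtrace \<rho> = 1"
  unfolding density_def by simp
lemma density_psd: "density n \<rho> \<Longrightarrow> psd n \<rho>"
  unfolding density_def by simp

lemma channel_trace:
  assumes dens: "density dpk \<rho>" and K: "kraus_channel dpk dct Ks"
  shows "mtrace (apply_channel dct Ks \<rho>) = 1" "apply_channel dct Ks \<rho> \<in> carrier_mat dct dct"
    "\<exists>(T :: (nat \<times> nat) set) y. rep dct (apply_channel dct Ks \<rho>) T y"
proof -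
  obtain T :: "nat set" and y where r: "rep dpk \<rho> T y" using psd_rep[OF density_psd[OF dens]] by blast
  have Kc: "\<forall>K\<in>set Ks. K \<in> carrier_mat dct dpk" using K unfolding kraus_channel_def by auto
  note cr = channel_rep[OF Kc r]
  show "\<exists>(T :: (nat \<times> nat) set) y. rep dct (apply_channel dct Ks \<rho>) T y" using cr by blast
  show "apply_channel dct Ks \<rho> \<in> carrier_mat dct dct" using cr unfolding rep_def by simp
  have fin: "finite T" using r unfolding rep_def by simp
  have "mtrace (apply_channel dct Ks \<rho>) = (\<Sum>(k,t)\<in>{..<length Ks} \<times> T. \<Sum>i<dct. cnj (mv (Ks!k) dpk (y t) i) * mv (Ks!k) dpk (y t) i)"
    unfolding mtrace_rep[OF cr] by (rule sum.cong) auto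
  also have "\<dots> = (\<Sum>k<length Ks. \<Sum>t\<in>T. \<Sum>i<dct. cnj (mv (Ks!k) dpk (y t) i) * mv (Ks!k) dpk (y t) i)"
    by (rule sum.cartesian_product[symmetric])
  also have "\<dots> = (\<Sum>t\<in>T. \<Sum>k<length Ks. \<Sum>i<dct. cnj (mv (Ks!k) dpk (y t) i) * mv (Ks!k) dpk (y t) i)"
    by (rule sum.swap)
  also have "\<dots> = (\<Sum>t\<in>T. \<Sum>c<dpk. cnj (y t c) * y t c)" using kraus_norm[OF K] by simp
  also have "\<dots> = mtrace \<rho>" using mtrace_rep[OF r] by simp
  also have "\<dots> = 1" using density_trace[OF dens] .
  finally show "mtrace (apply_channel dct Ks \<rho>) = 1" .
qed

lemma pair_orth:
  assumes dens: "density dpk \<rho>" and K0: "kraus_channel dpk dct K0s" and K1: "kraus_channel dpk dct K1s"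
    and E: "povm_elt dct E"
    and Z0: "Re (mtrace (E * apply_channel dct K0s \<rho>)) = 0"
    and Z1: "Re (mtrace ((1\<^sub>m dct - E) * apply_channel dct K1s \<rho>)) = 0"
  shows "\<exists>v. (\<Sum>c<dpk. cnj (v c) * v c) = 1 \<and>
     (\<forall>k0<length K0s. \<forall>k1<length K1s. ip dct (mv (K0s!k0) dpk v) (mv (K1s!k1) dpk v) = 0)"
proof -
  obtain T :: "nat set" and y where r: "rep dpk \<rho> T y" using psd_rep[OF density_psd[OF dens]] by blast
  have fin: "finite T" using r unfolding rep_def by simp
  have Ep: "psd dct E" and E1p: "psd dct (1\<^sub>m dct - E)" using E unfolding povm_elt_def by auto
  have Ec: "E \<in> carrier_mat dct dct" using psd_carrier[OF Ep] .
  have kill: "\<forall>k<length Ks. \<forall>t\<in>T. \<forall>i<dct. mv W dct (mv (Ks!k) dpk (y t)) i = 0"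
    if K: "kraus_channel dpk dct Ks" and W: "psd dct W" and Z: "Re (mtrace (W * apply_channel dct Ks \<rho>)) = 0"
    for Ks W
  proof -
    have Kc: "\<forall>K\<in>set Ks. K \<in> carrier_mat dct dpk" using K unfolding kraus_channel_def by auto
    note cr = channel_rep[OF Kc r]
    have fin2: "finite ({..<length Ks} \<times> T)" using fin by simp
    define Y where "Y = (\<lambda>(k,t). mv (Ks!k) dpk (y t))"
    have S: "(\<Sum>t\<in>{..<length Ks} \<times> T. Re (qf dct W (Y t))) = 0"
      using trace_psd_nonneg(1)[OF cr W] Z unfolding Y_def by simp
    have nn: "\<And>t. t \<in> {..<length Ks} \<times> T \<Longrightarrow> 0 \<le> Re (qf dct W (Y t))" using psd_qf[OF W] by blast
    have all0: "\<forall>t\<in>{..<length Ks} \<times> T. Re (qf dct W (Y t)) = 0"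
      using sum_nonneg_eq_0_iff[OF fin2, of "\<lambda>t. Re (qf dct W (Y t))"] S nn by auto
    show ?thesis
    proof (intro allI impI ballI)
      fix k t i assume k: "k < length Ks" and t: "t \<in> T" and i: "i < dct"
      have "Re (qf dct W (Y (k,t))) = 0" using all0 k t by auto
      then have "Re (qf dct W (mv (Ks!k) dpk (y t))) = 0" unfolding Y_def by simp
      then show "mv W dct (mv (Ks!k) dpk (y t)) i = 0" by (rule psd_qf_zero[OF W _ i])
    qed
  qed
  have k0: "\<forall>k<length K0s. \<forall>t\<in>T. \<forall>i<dct. mv E dct (mv (K0s!k) dpk (y t)) i = 0"
    using kill[OF K0 Ep Z0] .
  have k1: "\<forall>k<length K1s. \<forall>t\<in>T. \<forall>i<dct. mv (1\<^sub>m dct - E) dct (mv (K1s!k) dpk (y t)) i = 0"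
    using kill[OF K1 E1p Z1] .
  have "(\<Sum>t\<in>T. \<Sum>c<dpk. cnj (y t c) * y t c) = 1" using mtrace_rep[OF r] density_trace[OF dens] by simp
  then have "\<exists>t\<in>T. (\<Sum>c<dpk. cnj (y t c) * y t c) \<noteq> 0"
  proof (rule contrapos_pp)
    assume "\<not> (\<exists>t\<in>T. (\<Sum>c<dpk. cnj (y t c) * y t c) \<noteq> 0)"
    then have "(\<Sum>t\<in>T. \<Sum>c<dpk. cnj (y t c) * y t c) = 0" by (intro sum.neutral) auto
    then show "(\<Sum>t\<in>T. \<Sum>c<dpk. cnj (y t c) * y t c) \<noteq> 1" by simp
  qed
  then obtain t0 where t0: "t0 \<in> T" "(\<Sum>c<dpk. cnj (y t0 c) * y t0 c) \<noteq> 0" by blast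
  define nn where "nn = (\<Sum>c<dpk. (cmod (y t0 c))^2)"
  have nnc: "(\<Sum>c<dpk. cnj (y t0 c) * y t0 c) = of_real nn"
    unfolding nn_def by (simp add: cnj_mult_self)
  have nnpos: "nn > 0"
  proof -
    have "nn \<noteq> 0" using t0(2) nnc by auto
    moreover have "nn \<ge> 0" unfolding nn_def by (simp add: sum_nonneg)
    ultimately show ?thesis by simp
  qed
  define s where "s = sqrt nn"
  have spos: "s > 0" and ss: "s * s = nn" using nnpos unfolding s_def by auto
  define v where "v = (\<lambda>c. (1 / of_real s) * y t0 c)"
  have vnorm: "(\<Sum>c<dpk. cnj (v c) * v c) = 1"
  proof -
    have "(\<Sum>c<dpk. cnj (v c) * v c) = (1 / (of_real s * of_real s)) * (\<Sum>c<dpk. cnj (y t0 c) * y t0 c)"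
      unfolding v_def by (simp add: sum_distrib_left mult_ac)
    also have "\<dots> = 1" unfolding nnc ss[symmetric] using spos by simp
    finally show ?thesis .
  qed
  have mvK: "mv K dpk v = (\<lambda>i. (1 / of_real s) * mv K dpk (y t0) i)" for K
    unfolding v_def by (rule mv_scale)
  show ?thesis
  proof (intro exI[of _ v] conjI allI impI)
    show "(\<Sum>c<dpk. cnj (v c) * v c) = 1" by (rule vnorm)
    fix a b assume a: "a < length K0s" and b: "b < length K1s"
    define g where "g = mv (K0s!a) dpk v"
    define h where "h = mv (K1s!b) dpk v"
    have Eg: "mv E dct g i = 0" if "i < dct" for i
      unfolding g_def mvK mv_scale using k0 a t0(1) that by simp
    have Eh: "h i = mv E dct h i" if "i < dct" for i
    proof -
      have "mv (1\<^sub>m dct - E) dct h i = 0"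
        unfolding h_def mvK mv_scale using k1 b t0(1) that by simp
      then show ?thesis using mv_compl[OF Ec that] by simp
    qed
    have "ip dct g h = ip dct g (mv E dct h)" by (rule ip_cong) (use Eh in auto)
    also have "\<dots> = ip dct (mv E dct g) h" by (rule ip_herm[OF Ep])
    also have "\<dots> = ip dct (\<lambda>_. 0) h" by (rule ip_cong) (use Eg in auto)
    also have "\<dots> = 0" unfolding ip_def by simp
    finally show "ip dct (mv (K0s!a) dpk v) (mv (K1s!b) dpk v) = 0" unfolding g_def h_def .
  qed
qed

lemma pointwise_zero:
  fixes w Z mp :: "'a::finite \<Rightarrow> 'b::finite \<Rightarrow> real"
  assumes w0: "\<forall>a b. 0 \<le> w a b" and ws: "(\<Sum>a\<in>UNIV. \<Sum>b\<in>UNIV. w a b) = 1"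
    and ms: "(\<Sum>a\<in>UNIV. \<Sum>b\<in>UNIV. w a b * mp a b) = 1"
    and pz: "\<forall>a b. w a b > 0 \<longrightarrow> mp a b = 1 - Z a b \<and> 0 \<le> Z a b"
  shows "\<forall>a b. w a b > 0 \<longrightarrow> Z a b = 0"
proof -
  define Z' where "Z' a b = (if w a b > 0 then Z a b else 0)" for a b
  have eq: "w a b * mp a b = w a b - w a b * Z' a b" for a b
  proof (cases "w a b > 0")
    case True then show ?thesis using pz unfolding Z'_def by (simp add: right_diff_distrib)
  next
    case False then have "w a b = 0" using w0[rule_format, of a b] by linarith
    then show ?thesis by simp
  qed
  have "(\<Sum>a\<in>UNIV. \<Sum>b\<in>UNIV. w a b * Z' a b) = 0"
    using ms ws unfolding eq by (simp add: sum_subtractf)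
  then have s0: "(\<Sum>p\<in>UNIV \<times> UNIV. w (fst p) (snd p) * Z' (fst p) (snd p)) = 0"
    by (simp add: sum.cartesian_product case_prod_beta)
  have nn: "\<forall>p\<in>UNIV \<times> UNIV. 0 \<le> w (fst p) (snd p) * Z' (fst p) (snd p)"
    using w0 pz unfolding Z'_def by auto
  have all0: "\<forall>p\<in>UNIV \<times> UNIV. w (fst p) (snd p) * Z' (fst p) (snd p) = 0"
    using sum_nonneg_eq_0_iff[of "UNIV \<times> UNIV" "\<lambda>p. w (fst p) (snd p) * Z' (fst p) (snd p)"] s0 nn by simp
  show ?thesis
  proof (intro allI impI)
    fix a b assume pos: "w a b > 0"
    have "w a b * Z' a b = 0" using all0 by (metis UNIV_I fst_conv mem_Times_iff snd_conv)
    then have "Z' a b = 0" using pos by simp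
    then show "Z a b = 0" using pos unfolding Z'_def by simp
  qed
qed

lemma sum_Sigma3:
  fixes L :: "'b::finite \<Rightarrow> nat"
  shows "(\<Sum>t\<in>Sigma (UNIV::'a::finite set) (\<lambda>_. Sigma (UNIV::'b::finite set) (\<lambda>b. {..<L b})). f t)
   = (\<Sum>a\<in>UNIV. \<Sum>b\<in>UNIV. \<Sum>k<L b. f (a,b,k))"
proof -
  have "(\<Sum>t\<in>Sigma (UNIV::'a set) (\<lambda>_. Sigma (UNIV::'b set) (\<lambda>b. {..<L b})). f t)
      = (\<Sum>a\<in>UNIV. \<Sum>q\<in>Sigma (UNIV::'b set) (\<lambda>b. {..<L b}). f (a,q))"
    by (subst sum.Sigma) (auto intro!: finite_SigmaI)
  also have "\<dots> = (\<Sum>a\<in>UNIV. \<Sum>b\<in>UNIV. \<Sum>k<L b. f (a,b,k))"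
    by (rule sum.cong[OF refl], subst sum.Sigma) auto
  finally show ?thesis .
qed

lemma Y_ip:
  assumes J: "\<forall>p. J p < d" and inj: "inj J"
  shows "ip (r*d) (\<lambda>i. if i mod d = J p then f (i div d) else 0) (\<lambda>i. if i mod d = J p' then g (i div d) else 0)
     = (if p = p' then ip r f g else 0)"
proof -
  have d: "d > 0" using J by (metis gr_zeroI not_less_zero)
  have "ip (r*d) (\<lambda>i. if i mod d = J p then f (i div d) else 0) (\<lambda>i. if i mod d = J p' then g (i div d) else 0)
      = (\<Sum>a<r. \<Sum>b<d. cnj (if b = J p then f a else 0) * (if b = J p' then g a else 0))"
    unfolding ip_def sum_split_prod using d by (intro sum.cong refl) auto
  also have "\<dots> = (if p = p' then ip r f g else 0)"
  proof (cases "p = p'")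
    case True
    have "(\<Sum>a<r. \<Sum>b<d. cnj (if b = J p then f a else 0) * (if b = J p' then g a else 0))
        = (\<Sum>a<r. \<Sum>b<d. if b = J p then cnj (f a) * g a else 0)"
      unfolding True by (intro sum.cong refl) auto
    also have "\<dots> = ip r f g" unfolding ip_def using J by simp
    finally show ?thesis using True by simp
  next
    case False
    then have "J p \<noteq> J p'" using inj by (meson injD)
    then show ?thesis using False by (auto intro!: sum.neutral)
  qed
  finally show ?thesis .
qed

theorem theoremA1:
  fixes skgen :: "'sk::finite pmf" and pkgen :: "'sk \<Rightarrow> 'pk::finite pmf"
    and rho :: "'sk \<Rightarrow> 'pk \<Rightarrow> complex mat" and enc :: "'pk \<Rightarrow> bool \<Rightarrow> complex mat list"
    and dec :: "'sk \<Rightarrow> complex mat" and dpk dct :: nat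
  assumes "qpke_correct skgen pkgen rho enc dec dpk dct"
  shows "\<exists>dint adv. (\<forall>pk. kraus_channel dpk (dpk * dint) (adv pk)) \<and>
     trace_distance (dct * dint) (exp_out skgen pkgen rho enc dpk dct dint adv False)
                                  (exp_out skgen pkgen rho enc dpk dct dint adv True) = 1 \<and>
     (\<exists>E. povm_elt (dct * dint) E \<and>
        (\<forall>m. meas_prob (dct * dint) E m (exp_out skgen pkgen rho enc dpk dct dint adv m) = 1))"
proof -
  note corr = assms[unfolded qpke_correct_def]
  have dens: "density dpk (rho sk pk)" if "pmf skgen sk > 0" "pmf (pkgen sk) pk > 0" for sk pk
    using corr that by blast
  have kr: "kraus_channel dpk dct (enc pk m)" for pk m using corr by blast
  have dc: "povm_elt dct (dec sk)" for sk using corr by blast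
  have cor: "(\<Sum>sk\<in>UNIV. \<Sum>pk\<in>UNIV. pmf skgen sk * pmf (pkgen sk) pk *
            meas_prob dct (dec sk) m (apply_channel dct (enc pk m) (rho sk pk))) = 1" for m
    using corr by blast
  define w where "w sk pk = pmf skgen sk * pmf (pkgen sk) pk" for sk pk
  have w0: "\<forall>sk pk. 0 \<le> w sk pk" by (simp add: w_def)
  have wpos: "pmf skgen sk > 0 \<and> pmf (pkgen sk) pk > 0" if "w sk pk > 0" for sk pk
    using that pmf_nonneg[of skgen sk] pmf_nonneg[of "pkgen sk" pk] unfolding w_def
    by (auto simp: zero_less_mult_iff)
  have densw: "density dpk (rho sk pk)" if "w sk pk > 0" for sk pk using dens wpos[OF that] by blast
  have ws: "(\<Sum>sk\<in>UNIV. \<Sum>pk\<in>UNIV. w sk pk) = 1"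
  proof -
    have "(\<Sum>sk\<in>UNIV. \<Sum>pk\<in>UNIV. w sk pk) = (\<Sum>sk\<in>UNIV. pmf skgen sk * (\<Sum>pk\<in>UNIV. pmf (pkgen sk) pk))"
      unfolding w_def by (simp add: sum_distrib_left)
    also have "\<dots> = (\<Sum>sk\<in>UNIV. pmf skgen sk)" by (simp add: sum_pmf_eq_1)
    also have "\<dots> = 1" by (simp add: sum_pmf_eq_1)
    finally show ?thesis .
  qed
  define X where "X sk pk m = apply_channel dct (enc pk m) (rho sk pk)" for sk pk m
  define Z where "Z m sk pk = Re (mtrace (wrongE dct (dec sk) m * X sk pk m))" for m sk pk
  have pz: "\<forall>sk pk. w sk pk > 0 \<longrightarrow> meas_prob dct (dec sk) m (X sk pk m) = 1 - Z m sk pk \<and> 0 \<le> Z m sk pk" for m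
  proof (intro allI impI)
    fix sk pk assume v: "w sk pk > 0"
    note d = densw[OF v]
    obtain T :: "(nat \<times> nat) set" and y where r: "rep dct (X sk pk m) T y"
      using channel_trace(3)[OF d kr] unfolding X_def by blast
    have Xc: "X sk pk m \<in> carrier_mat dct dct" and Xt: "mtrace (X sk pk m) = 1"
      using channel_trace(1,2)[OF d kr] unfolding X_def by auto
    have Ec: "dec sk \<in> carrier_mat dct dct" using dc unfolding povm_elt_def using psd_carrier by blast
    show "meas_prob dct (dec sk) m (X sk pk m) = 1 - Z m sk pk \<and> 0 \<le> Z m sk pk"
      unfolding Z_def using meas_wrong[OF Xc Xt Ec] trace_psd_nonneg(2)[OF r wrongE_psd[OF dc]] by simp
  qed
  have Z0: "Z m sk pk = 0" if "w sk pk > 0" for m sk pk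
  proof -
    have ms: "(\<Sum>sk\<in>UNIV. \<Sum>pk\<in>UNIV. w sk pk * meas_prob dct (dec sk) m (X sk pk m)) = 1"
      using cor[of m] unfolding w_def X_def .
    show ?thesis using pointwise_zero[OF w0 ws ms pz[of m]] that by blast
  qed
  obtain sk0 pk0 where v0: "w sk0 pk0 > 0"
  proof -
    have "\<exists>sk pk. w sk pk > 0"
    proof (rule ccontr)
      assume "\<not> (\<exists>sk pk. w sk pk > 0)"
      then have "\<forall>sk pk. w sk pk = 0" using w0 by (metis linorder_neqE_linordered_idom not_le)
      then have "(\<Sum>sk\<in>UNIV. \<Sum>pk\<in>UNIV. w sk pk) = 0" by simp
      then show False using ws by simp
    qed
    then show ?thesis using that by blast
  qed
  have dpk_pos: "dpk > 0"
  proof (rule ccontr)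
    assume "\<not> dpk > 0"
    then have "dpk = 0" by simp
    moreover have "rho sk0 pk0 \<in> carrier_mat dpk dpk" "mtrace (rho sk0 pk0) = 1"
      using densw[OF v0] psd_carrier density_psd density_trace by blast+
    ultimately show False unfolding mtrace_def by simp
  qed
  have orth: "\<exists>v. (\<Sum>c<dpk. cnj (v c) * v c) = 1 \<and> ((\<exists>sk. w sk pk > 0) \<longrightarrow>
      (\<forall>k0<length (enc pk False). \<forall>k1<length (enc pk True).
         ip dct (mv (enc pk False ! k0) dpk v) (mv (enc pk True ! k1) dpk v) = 0))" for pk
  proof (cases "\<exists>sk. w sk pk > 0")
    case True
    then obtain sk where v: "w sk pk > 0" by blast
    have z0: "Re (mtrace (dec sk * apply_channel dct (enc pk False) (rho sk pk))) = 0"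
      using Z0[OF v, of False] unfolding Z_def X_def wrongE_def by simp
    have z1: "Re (mtrace ((1\<^sub>m dct - dec sk) * apply_channel dct (enc pk True) (rho sk pk))) = 0"
      using Z0[OF v, of True] unfolding Z_def X_def wrongE_def by simp
    show ?thesis using pair_orth[OF densw[OF v] kr kr dc z0 z1] by blast
  next
    case False
    show ?thesis
    proof (intro exI[of _ "\<lambda>c. if c = 0 then (1::complex) else 0"] conjI impI)
      have "(\<Sum>c<dpk. cnj (if c = 0 then 1 else 0) * (if c = 0 then 1 else (0::complex)))
          = (\<Sum>c<dpk. if c = 0 then 1 else 0)" by (rule sum.cong) auto
      then show "(\<Sum>c<dpk. cnj (if c = 0 then 1 else 0) * (if c = 0 then 1 else (0::complex))) = 1"
        using dpk_pos by simp
    next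
      assume "\<exists>sk. w sk pk > 0"
      then show "\<forall>k0<length (enc pk False). \<forall>k1<length (enc pk True).
         ip dct (mv (enc pk False ! k0) dpk (\<lambda>c. if c = 0 then 1 else 0)) (mv (enc pk True ! k1) dpk (\<lambda>c. if c = 0 then 1 else 0)) = 0"
        using False by blast
    qed
  qed
  then obtain V where V: "\<forall>pk. (\<Sum>c<dpk. cnj (V pk c) * V pk c) = 1 \<and> ((\<exists>sk. w sk pk > 0) \<longrightarrow>
      (\<forall>k0<length (enc pk False). \<forall>k1<length (enc pk True).
         ip dct (mv (enc pk False ! k0) dpk (V pk)) (mv (enc pk True ! k1) dpk (V pk)) = 0))"
    by metis
  obtain J :: "'pk \<Rightarrow> nat" and dint where Jimg: "J ` UNIV = {i. i < dint}" and Jinj: "inj J"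
    using finite_imp_inj_to_nat_seg[of "UNIV :: 'pk set"] by auto
  have Jlt: "\<forall>p. J p < dint" using Jimg by blast
  have dint_pos: "dint > 0" using Jlt by (metis gr_zeroI not_less_zero)
  define u where "u pk = (\<lambda>i. if i mod dint = J pk then V pk (i div dint) else 0)" for pk
  have unorm: "(\<Sum>i<dpk*dint. cnj (u pk i) * u pk i) = 1" for pk
  proof -
    have "(\<Sum>i<dpk*dint. cnj (u pk i) * u pk i) = ip (dpk*dint) (u pk) (u pk)" unfolding ip_def ..
    also have "\<dots> = ip dpk (V pk) (V pk)" unfolding u_def Y_ip[OF Jlt Jinj] by simp
    also have "\<dots> = 1" using V unfolding ip_def by blast
    finally show ?thesis .
  qed
  define adv where "adv pk = advL dpk (dpk*dint) (u pk)" for pk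
  have advk: "\<forall>pk. kraus_channel dpk (dpk * dint) (adv pk)"
    unfolding adv_def using adv_kraus[OF unorm] by blast
  define Y where "Y pk m k = (\<lambda>i. if i mod dint = J pk then mv (enc pk m ! k) dpk (V pk) (i div dint) else 0)" for pk m k
  have Kc: "K \<in> carrier_mat dct dpk" if "K \<in> set (enc pk m)" for K pk m
    using kr[of pk m] that unfolding kraus_channel_def by auto
  have entry_valid: "apply_channel (dct*dint) (map (\<lambda>K. kron K (1\<^sub>m dint)) (enc pk m))
        (apply_channel (dpk*dint) (adv pk) (rho sk pk)) $$ (i,j)
      = (\<Sum>k<length (enc pk m). Y pk m k i * cnj (Y pk m k j))"
    if v: "w sk pk > 0" and ij: "i < dct*dint" "j < dct*dint" for sk pk m i j
  proof -
    note d = densw[OF v]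
    have rc: "rho sk pk \<in> carrier_mat dpk dpk" using psd_carrier[OF density_psd[OF d]] .
    have r1: "rep (dpk*dint) (apply_channel (dpk*dint) (adv pk) (rho sk pk)) (UNIV :: unit set) (\<lambda>_. u pk)"
      unfolding adv_def by (rule adv_apply[OF rc density_trace[OF d]])
    let ?Ks = "map (\<lambda>K. kron K (1\<^sub>m dint)) (enc pk m)"
    have Ksc: "\<forall>K\<in>set ?Ks. K \<in> carrier_mat (dct*dint) (dpk*dint)"
      using Kc kron_carrier by fastforce
    note r2 = channel_rep[OF Ksc r1]
    have "apply_channel (dct*dint) ?Ks (apply_channel (dpk*dint) (adv pk) (rho sk pk)) $$ (i,j)
        = (\<Sum>t\<in>{..<length ?Ks} \<times> (UNIV :: unit set). (case t of (k,t) \<Rightarrow> mv (?Ks!k) (dpk*dint) (u pk)) i *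
              cnj ((case t of (k,t) \<Rightarrow> mv (?Ks!k) (dpk*dint) (u pk)) j))"
      using r2 ij unfolding rep_def by blast
    also have "\<dots> = (\<Sum>k<length ?Ks. \<Sum>t\<in>(UNIV :: unit set). mv (?Ks!k) (dpk*dint) (u pk) i * cnj (mv (?Ks!k) (dpk*dint) (u pk) j))"
      by (subst sum.cartesian_product) (simp add: case_prod_beta)
    also have "\<dots> = (\<Sum>k<length (enc pk m). Y pk m k i * cnj (Y pk m k j))"
    proof (rule sum.cong)
      fix k assume "k \<in> {..<length (enc pk m)}"
      then have k: "k < length (enc pk m)" by simp
      have Kk: "enc pk m ! k \<in> carrier_mat dct dpk" using Kc[OF nth_mem[OF k]] .
      have "mv (?Ks!k) (dpk*dint) (u pk) i' = Y pk m k i'" if "i' < dct*dint" for i'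
        using kron_mv[OF Kk, of "J pk" dint i' "V pk"] Jlt that k unfolding u_def Y_def by simp
      then show "(\<Sum>t\<in>(UNIV :: unit set). mv (?Ks!k) (dpk*dint) (u pk) i * cnj (mv (?Ks!k) (dpk*dint) (u pk) j))
          = Y pk m k i * cnj (Y pk m k j)" using ij by simp
    qed simp
    finally show ?thesis .
  qed
  define T where "T m = Sigma (UNIV::'sk set) (\<lambda>_. Sigma (UNIV::'pk set) (\<lambda>pk. {..<length (enc pk m)}))" for m
  define y where "y m = (\<lambda>(sk,pk,k). \<lambda>i. complex_of_real (sqrt (w sk pk)) * Y pk m k i)" for m
  have finT: "finite (T m)" for m unfolding T_def by (auto intro!: finite_SigmaI)
  have rep_exp: "rep (dct*dint) (exp_out skgen pkgen rho enc dpk dct dint adv m) (T m) (y m)" for m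
    unfolding rep_def
  proof (intro conjI allI impI)
    show "exp_out skgen pkgen rho enc dpk dct dint adv m \<in> carrier_mat (dct * dint) (dct * dint)"
      unfolding exp_out_def by simp
    show "finite (T m)" by (rule finT)
    fix i j assume ij: "i < dct * dint" "j < dct * dint"
    have "exp_out skgen pkgen rho enc dpk dct dint adv m $$ (i,j) = (\<Sum>sk\<in>UNIV. \<Sum>pk\<in>UNIV.
        of_real (w sk pk) * apply_channel (dct * dint) (map (\<lambda>K. kron K (1\<^sub>m dint)) (enc pk m))
          (apply_channel (dpk * dint) (adv pk) (rho sk pk)) $$ (i,j))"
      unfolding exp_out_def w_def using ij by simp
    also have "\<dots> = (\<Sum>sk\<in>UNIV. \<Sum>pk\<in>UNIV. \<Sum>k<length (enc pk m). y m (sk,pk,k) i * cnj (y m (sk,pk,k) j))"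
    proof (intro sum.cong refl)
      fix sk pk
      show "of_real (w sk pk) * apply_channel (dct * dint) (map (\<lambda>K. kron K (1\<^sub>m dint)) (enc pk m))
          (apply_channel (dpk * dint) (adv pk) (rho sk pk)) $$ (i,j)
        = (\<Sum>k<length (enc pk m). y m (sk,pk,k) i * cnj (y m (sk,pk,k) j))"
      proof (cases "w sk pk > 0")
        case True
        have sq: "complex_of_real (sqrt (w sk pk)) * cnj (complex_of_real (sqrt (w sk pk))) = of_real (w sk pk)"
          using w0 by (simp flip: of_real_mult)
        show ?thesis unfolding entry_valid[OF True ij] y_def
          by (simp add: sum_distrib_left) (intro sum.cong refl, simp add: sq[symmetric] mult_ac)
      next
        case False
        then have "w sk pk = 0" using w0[rule_format, of sk pk] by linarith
        then show ?thesis unfolding y_def by simp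
      qed
    qed
    also have "\<dots> = (\<Sum>t\<in>T m. y m t i * cnj (y m t j))" unfolding T_def by (rule sum_Sigma3[symmetric])
    finally show "exp_out skgen pkgen rho enc dpk dct dint adv m $$ (i,j) = (\<Sum>t\<in>T m. y m t i * cnj (y m t j))" .
  qed
  have Ynorm: "ip (dct*dint) (Y pk m k) (Y pk m k) = ip dct (mv (enc pk m ! k) dpk (V pk)) (mv (enc pk m ! k) dpk (V pk))" for pk m k
    unfolding Y_def Y_ip[OF Jlt Jinj] by simp
  have tr_exp: "mtrace (exp_out skgen pkgen rho enc dpk dct dint adv m) = 1" for m
  proof -
    have "mtrace (exp_out skgen pkgen rho enc dpk dct dint adv m) = (\<Sum>t\<in>T m. ip (dct*dint) (y m t) (y m t))"
      unfolding mtrace_rep[OF rep_exp] ip_def ..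
    also have "\<dots> = (\<Sum>sk\<in>UNIV. \<Sum>pk\<in>UNIV. \<Sum>k<length (enc pk m). ip (dct*dint) (y m (sk,pk,k)) (y m (sk,pk,k)))"
      unfolding T_def by (rule sum_Sigma3)
    also have "\<dots> = (\<Sum>sk\<in>UNIV. \<Sum>pk\<in>UNIV. of_real (w sk pk) * (\<Sum>k<length (enc pk m).
          ip dct (mv (enc pk m ! k) dpk (V pk)) (mv (enc pk m ! k) dpk (V pk))))"
    proof (intro sum.cong refl)
      fix sk pk
      have sq: "cnj (complex_of_real (sqrt (w sk pk))) * complex_of_real (sqrt (w sk pk)) = of_real (w sk pk)"
        using w0 by (simp flip: of_real_mult)
      have sq2: "complex_of_real (sqrt (w sk pk)) * complex_of_real (sqrt (w sk pk)) = of_real (w sk pk)"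
        using w0 by (simp flip: of_real_mult)
      show "(\<Sum>k<length (enc pk m). ip (dct*dint) (y m (sk,pk,k)) (y m (sk,pk,k))) = of_real (w sk pk) * (\<Sum>k<length (enc pk m).
          ip dct (mv (enc pk m ! k) dpk (V pk)) (mv (enc pk m ! k) dpk (V pk)))"
        unfolding y_def by (simp add: ip_scale_left ip_scale_right Ynorm sum_distrib_left mult.assoc[symmetric] sq sq2)
    qed
    also have "\<dots> = (\<Sum>sk\<in>UNIV. \<Sum>pk\<in>UNIV. of_real (w sk pk))"
    proof (intro sum.cong refl)
      fix sk pk
      have "(\<Sum>k<length (enc pk m). ip dct (mv (enc pk m ! k) dpk (V pk)) (mv (enc pk m ! k) dpk (V pk)))
          = (\<Sum>c<dpk. cnj (V pk c) * V pk c)" using kraus_norm[OF kr[of pk m]] unfolding ip_def by simp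
      also have "\<dots> = 1" using V by blast
      finally show "of_real (w sk pk) * (\<Sum>k<length (enc pk m). ip dct (mv (enc pk m ! k) dpk (V pk)) (mv (enc pk m ! k) dpk (V pk)))
          = of_real (w sk pk)" by simp
    qed
    also have "\<dots> = of_real (\<Sum>sk\<in>UNIV. \<Sum>pk\<in>UNIV. w sk pk)" by simp
    also have "\<dots> = 1" using ws by simp
    finally show ?thesis .
  qed
  define \<rho>0 where "\<rho>0 = exp_out skgen pkgen rho enc dpk dct dint adv False"
  define \<rho>1 where "\<rho>1 = exp_out skgen pkgen rho enc dpk dct dint adv True"
  define N where "N = dct * dint"
  have r0: "rep N \<rho>0 (T False) (y False)" unfolding \<rho>0_def N_def by (rule rep_exp)
  have r1: "rep N \<rho>1 (T True) (y True)" unfolding \<rho>1_def N_def by (rule rep_exp)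
  have c0: "\<rho>0 \<in> carrier_mat N N" using r0 unfolding rep_def by simp
  have c1: "\<rho>1 \<in> carrier_mat N N" using r1 unfolding rep_def by simp
  have t0: "mtrace \<rho>0 = 1" unfolding \<rho>0_def by (rule tr_exp)
  have t1: "mtrace \<rho>1 = 1" unfolding \<rho>1_def by (rule tr_exp)
  have orthY: "ip N (y True t) (y False t') = 0" if t: "t \<in> T True" and t': "t' \<in> T False" for t t'
  proof -
    obtain sk pk k where tt: "t = (sk,pk,k)" and k: "k < length (enc pk True)"
      using t unfolding T_def by auto
    obtain sk' pk' k' where tt': "t' = (sk',pk',k')" and k': "k' < length (enc pk' False)"
      using t' unfolding T_def by auto
    have "ip N (y True t) (y False t') = cnj (complex_of_real (sqrt (w sk pk))) * complex_of_real (sqrt (w sk' pk'))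
        * ip N (Y pk True k) (Y pk' False k')"
      unfolding tt tt' y_def by (simp add: ip_scale_left ip_scale_right)
    also have "\<dots> = 0"
    proof (cases "w sk pk > 0 \<and> w sk' pk' > 0")
      case True
      show ?thesis
      proof (cases "pk = pk'")
        case eq: True
        have "ip N (Y pk True k) (Y pk' False k') = ip dct (mv (enc pk True ! k) dpk (V pk)) (mv (enc pk False ! k') dpk (V pk))"
          unfolding Y_def N_def Y_ip[OF Jlt Jinj] using eq by simp
        also have "\<dots> = cnj (ip dct (mv (enc pk False ! k') dpk (V pk)) (mv (enc pk True ! k) dpk (V pk)))"
          by (rule ip_conj)
        also have "\<dots> = 0"
        proof -
          have ex: "\<exists>sk. w sk pk > 0" using True by blast
          have k'': "k' < length (enc pk False)" using k' eq by simp
          have "ip dct (mv (enc pk False ! k') dpk (V pk)) (mv (enc pk True ! k) dpk (V pk)) = 0"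
            using conjunct2[OF spec[OF V, of pk]] ex k k'' by blast
          then show ?thesis by simp
        qed
        finally show ?thesis by simp
      next
        case False
        have "ip N (Y pk True k) (Y pk' False k') = 0"
          unfolding Y_def N_def Y_ip[OF Jlt Jinj] using False by simp
        then show ?thesis by simp
      qed
    next
      case False
      then have "w sk pk = 0 \<or> w sk' pk' = 0" using w0[rule_format, of sk pk] w0[rule_format, of sk' pk'] by linarith
      then show ?thesis by auto
    qed
    finally show ?thesis .
  qed
  have "finite (y True ` T True)" using finT[of True] by (rule finite_imageI)
  then obtain xs where xs: "set xs = y True ` T True" using finite_list by blast
  have ex_es: "\<exists>es. orthonormal N es \<and>
     (\<forall>x\<in>set xs. \<forall>i<N. x i = (\<Sum>a<length es. ip N (es!a) x * (es!a) i)) \<and>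
     (\<forall>z. (\<forall>x\<in>set xs. ip N x z = 0) \<longrightarrow> (\<forall>a<length es. ip N (es!a) z = 0))"
    by (rule orthonormalize)
  then obtain es where es: "orthonormal N es \<and>
     (\<forall>x\<in>set xs. \<forall>i<N. x i = (\<Sum>a<length es. ip N (es!a) x * (es!a) i)) \<and>
     (\<forall>z. (\<forall>x\<in>set xs. ip N x z = 0) \<longrightarrow> (\<forall>a<length es. ip N (es!a) z = 0))"
    by (rule exE)
  have ON: "orthonormal N es" using es by (rule conjunct1)
  have RC: "\<forall>x\<in>set xs. \<forall>i<N. x i = (\<Sum>a<length es. ip N (es!a) x * (es!a) i)"
    using es[THEN conjunct2, THEN conjunct1] .
  have OZ: "\<forall>z. (\<forall>x\<in>set xs. ip N x z = 0) \<longrightarrow> (\<forall>a<length es. ip N (es!a) z = 0)"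
    using es[THEN conjunct2, THEN conjunct2] .
  define P where "P = projm N es"
  have PP: "is_proj N P" unfolding P_def by (rule projm_proj[OF ON])
  have Pc: "P \<in> carrier_mat N N" using PP unfolding is_proj_def by simp
  have fix1: "mv P N (y True t) i = y True t i" if "t \<in> T True" "i < N" for t i
  proof -
    have "y True t \<in> set xs" using xs that(1) by blast
    then have "y True t i = (\<Sum>a<length es. ip N (es!a) (y True t) * (es!a) i)" using RC that(2) by blast
    then show ?thesis unfolding P_def projm_mv[OF that(2)] by simp
  qed
  have fix0: "mv P N (y False t) i = 0" if "t \<in> T False" "i < N" for t i
  proof -
    have "\<forall>x\<in>set xs. ip N x (y False t) = 0"
    proof
      fix x assume "x \<in> set xs"
      then obtain t1 where t1: "t1 \<in> T True" "x = y True t1" using xs by blast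
      show "ip N x (y False t) = 0" unfolding t1(2) by (rule orthY[OF t1(1) that(1)])
    qed
    then have "\<forall>a<length es. ip N (es!a) (y False t) = 0" using OZ by (rule_tac mp[OF spec[OF OZ]])
    then show ?thesis unfolding P_def projm_mv[OF that(2)] by simp
  qed
  have trP1: "mtrace (P * \<rho>1) = 1"
  proof -
    have "mtrace (P * \<rho>1) = (\<Sum>t\<in>T True. qf N P (y True t))" by (rule trace_rep[OF r1 Pc])
    also have "\<dots> = (\<Sum>t\<in>T True. ip N (y True t) (y True t))"
      unfolding qf_def by (intro sum.cong refl ip_cong) (auto simp: fix1)
    also have "\<dots> = mtrace \<rho>1" unfolding mtrace_rep[OF r1] ip_def ..
    finally show ?thesis using t1 by simp
  qed
  have trP0: "mtrace (P * \<rho>0) = 0"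
  proof -
    have "mtrace (P * \<rho>0) = (\<Sum>t\<in>T False. qf N P (y False t))" by (rule trace_rep[OF r0 Pc])
    also have "\<dots> = (\<Sum>t\<in>T False. ip N (y False t) (\<lambda>_. 0))"
      unfolding qf_def by (intro sum.cong refl ip_cong) (auto simp: fix0)
    also have "\<dots> = 0" unfolding ip_def by simp
    finally show ?thesis .
  qed
  have Q0: "is_proj N (1\<^sub>m N - P)" by (rule proj_compl[OF PP])
  have povm: "povm_elt N P" unfolding povm_elt_def using proj_psd[OF PP] proj_psd[OF Q0] by simp
  have mp1: "meas_prob N P True \<rho>1 = 1" unfolding meas_prob_def using trP1 by simp
  have mp0: "meas_prob N P False \<rho>0 = 1"
    unfolding meas_prob_def using mtrace_compl[OF Pc c0] trP0 t0 by simp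
  have td: "trace_distance N \<rho>0 \<rho>1 = 1"
    unfolding trace_distance_def
  proof (rule cSup_eq_maximum)
    let ?Q = "1\<^sub>m N - P"
    have Qc: "?Q \<in> carrier_mat N N" using Q0 unfolding is_proj_def by simp
    have "mtrace (?Q * (\<rho>0 - \<rho>1)) = mtrace (?Q * \<rho>0) - mtrace (?Q * \<rho>1)"
      by (rule mtrace_mult_minus[OF Qc c0 c1])
    also have "\<dots> = 1" using mtrace_compl[OF Pc c0] mtrace_compl[OF Pc c1] trP0 trP1 t0 t1 by simp
    finally have "Re (mtrace (?Q * (\<rho>0 - \<rho>1))) = 1" by simp
    moreover have "?Q \<in> carrier_mat N N \<and> dagger ?Q = ?Q \<and> ?Q * ?Q = ?Q" using Q0 unfolding is_proj_def by simp
    ultimately have "\<exists>Q. 1 = Re (mtrace (Q * (\<rho>0 - \<rho>1))) \<and> Q \<in> carrier_mat N N \<and> dagger Q = Q \<and> Q * Q = Q"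
      by metis
    then show "1 \<in> {Re (mtrace (Q * (\<rho>0 - \<rho>1))) |Q. Q \<in> carrier_mat N N \<and> dagger Q = Q \<and> Q * Q = Q}"
      by simp
  next
    fix x assume "x \<in> {Re (mtrace (Q * (\<rho>0 - \<rho>1))) |Q. Q \<in> carrier_mat N N \<and> dagger Q = Q \<and> Q * Q = Q}"
    then obtain Q where x: "x = Re (mtrace (Q * (\<rho>0 - \<rho>1)))" and Qp: "is_proj N Q"
      unfolding is_proj_def by blast
    have Qc: "Q \<in> carrier_mat N N" using Qp unfolding is_proj_def by simp
    have a: "0 \<le> Re (mtrace (Q * \<rho>1))" by (rule trace_psd_nonneg(2)[OF r1 proj_psd[OF Qp]])
    have b: "0 \<le> Re (mtrace ((1\<^sub>m N - Q) * \<rho>0))" by (rule trace_psd_nonneg(2)[OF r0 proj_psd[OF proj_compl[OF Qp]]])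
    have "x = Re (mtrace (Q * \<rho>0)) - Re (mtrace (Q * \<rho>1))" unfolding x mtrace_mult_minus[OF Qc c0 c1] by simp
    also have "Re (mtrace (Q * \<rho>0)) = 1 - Re (mtrace ((1\<^sub>m N - Q) * \<rho>0))"
      using mtrace_compl[OF Qc c0] t0 by simp
    finally show "x \<le> 1" using a b by simp
  qed
  show ?thesis
  proof (intro exI[of _ dint] exI[of _ adv] conjI)
    show "\<forall>pk. kraus_channel dpk (dpk * dint) (adv pk)" by (rule advk)
    show "trace_distance (dct * dint) (exp_out skgen pkgen rho enc dpk dct dint adv False)
        (exp_out skgen pkgen rho enc dpk dct dint adv True) = 1"
      using td unfolding \<rho>0_def \<rho>1_def N_def .
    show "\<exists>E. povm_elt (dct * dint) E \<and>
        (\<forall>m. meas_prob (dct * dint) E m (exp_out skgen pkgen rho enc dpk dct dint adv m) = 1)"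
    proof (intro exI[of _ P] conjI allI)
      show "povm_elt (dct * dint) P" using povm unfolding N_def .
      fix m show "meas_prob (dct * dint) P m (exp_out skgen pkgen rho enc dpk dct dint adv m) = 1"
        using mp0 mp1 unfolding \<rho>0_def \<rho>1_def N_def by (cases m) auto
    qed
  qed
qed

end
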